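(* Let $G$ be a Berge graph, let $X\subseteq V(G)$ be anticonnected, let $C$ be a hole in $G\setminus X$ of length $>4$, and let $uv$ be an edge of $C$ such that $u,v$ are $X$-complete and no other vertex of $C$ is $X$-complete. Number the vertices of $C$ as $p_1,\dots,p_n$ in order with $p_1=u$, $p_n=v$. Then either $X$ contains a vertex adjacent to $u$ and $v$ and to no other vertex of $C$, or $X$ contains two nonadjacent vertices $a,b$ such that the neighbours of $a$ in $V(C)$ are exactly $p_1,p_2,p_n$ and the neighbours of $b$ in $V(C)$ are exactly $p_1,p_{n-1},p_n$.
   Context: Graphs are finite and simple. Hole: induced cycle of length $\ge4$; antihole: induced subgraph whose complement is a hole; Berge: all holes and antiholes have even length. $X$ is anticonnected if the complement of $G|X$ is connected; a vertex is $X$-complete if it is adjacent to every vertex of $X$. *)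

theory Defs
  imports Main
begin

definition simple_graph :: "'a set \<Rightarrow> ('a \<Rightarrow> 'a \<Rightarrow> bool) \<Rightarrow> bool" where
  "simple_graph V E \<longleftrightarrow> finite V \<and> (\<forall>x y. E x y \<longrightarrow> x \<in> V \<and> y \<in> V) \<and>
     (\<forall>x y. E x y \<longrightarrow> E y x) \<and> (\<forall>x. \<not> E x x)"

definition compl_adj :: "('a \<Rightarrow> 'a \<Rightarrow> bool) \<Rightarrow> 'a \<Rightarrow> 'a \<Rightarrow> bool" where
  "compl_adj E x y \<longleftrightarrow> x \<noteq> y \<and> \<not> E x y"

text \<open>A hole in the induced subgraph on S, given as the cyclic list of its vertices
  p_1,...,p_n (list index i corresponds to p_(i+1)): an induced cycle of length at least 4.\<close>
definition hole_in :: "'a set \<Rightarrow> ('a \<Rightarrow> 'a \<Rightarrow> bool) \<Rightarrow> 'a list \<Rightarrow> bool" where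
  "hole_in S E cs \<longleftrightarrow> length cs \<ge> 4 \<and> distinct cs \<and> set cs \<subseteq> S \<and>
     (\<forall>i < length cs. \<forall>j < length cs.
        E (cs ! i) (cs ! j) \<longleftrightarrow> (j = Suc i mod length cs \<or> i = Suc j mod length cs))"

definition antihole_in :: "'a set \<Rightarrow> ('a \<Rightarrow> 'a \<Rightarrow> bool) \<Rightarrow> 'a list \<Rightarrow> bool" where
  "antihole_in S E cs \<longleftrightarrow> hole_in S (compl_adj E) cs"

definition berge :: "'a set \<Rightarrow> ('a \<Rightarrow> 'a \<Rightarrow> bool) \<Rightarrow> bool" where
  "berge V E \<longleftrightarrow> simple_graph V E \<and>
     (\<forall>cs. hole_in V E cs \<longrightarrow> even (length cs)) \<and>
     (\<forall>cs. antihole_in V E cs \<longrightarrow> even (length cs))"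

definition anticonnected :: "('a \<Rightarrow> 'a \<Rightarrow> bool) \<Rightarrow> 'a set \<Rightarrow> bool" where
  "anticonnected E X \<longleftrightarrow> X \<noteq> {} \<and>
     (\<forall>x\<in>X. \<forall>y\<in>X. (\<lambda>a b. a \<in> X \<and> b \<in> X \<and> compl_adj E a b)\<^sup>*\<^sup>* x y)"

definition complete_to :: "('a \<Rightarrow> 'a \<Rightarrow> bool) \<Rightarrow> 'a set \<Rightarrow> 'a \<Rightarrow> bool" where
  "complete_to E X w \<longleftrightarrow> (\<forall>x\<in>X. E w x)"

end

theory Submission
  imports Defs
begin

definition ipath :: "('a \<Rightarrow> 'a \<Rightarrow> bool) \<Rightarrow> 'a list \<Rightarrow> bool" where
  "ipath R ps \<longleftrightarrow> distinct ps \<and>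
     (\<forall>i<length ps. \<forall>j<length ps. R (ps!i) (ps!j) \<longleftrightarrow> (j = Suc i \<or> i = Suc j))"

lemma ipath_single: "\<not> R v v \<Longrightarrow> ipath R [v]"
  by (auto simp: ipath_def)

lemma ipath_rev: "ipath R ps \<Longrightarrow> ipath R (rev ps)"
  unfolding ipath_def
proof (intro conjI allI impI)
  assume a: "distinct ps \<and> (\<forall>i<length ps. \<forall>j<length ps. R (ps ! i) (ps ! j) = (j = Suc i \<or> i = Suc j))"
  then show "distinct (rev ps)" by simp
  fix i j assume i: "i < length (rev ps)" and j: "j < length (rev ps)"
  have "R (rev ps ! i) (rev ps ! j) = R (ps ! (length ps - Suc i)) (ps ! (length ps - Suc j))"
    using i j by (simp add: rev_nth)
  also have "\<dots> = (length ps - Suc j = Suc (length ps - Suc i) \<or> length ps - Suc i = Suc (length ps - Suc j))"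
    using a i j by auto
  also have "\<dots> = (j = Suc i \<or> i = Suc j)" using i j by auto
  finally show "R (rev ps ! i) (rev ps ! j) = (j = Suc i \<or> i = Suc j)" .
qed

lemma ipath_snoc:
  assumes p: "ipath R ps" and ne: "ps \<noteq> []" and v: "v \<notin> set ps" "\<not> R v v"
    and l: "R (last ps) v" "R v (last ps)"
    and o: "\<And>u. u \<in> set (butlast ps) \<Longrightarrow> \<not> R u v \<and> \<not> R v u"
  shows "ipath R (ps @ [v])"
  unfolding ipath_def
proof (intro conjI allI impI)
  show "distinct (ps @ [v])" using p v unfolding ipath_def by simp
  fix i j assume i: "i < length (ps @ [v])" and j: "j < length (ps @ [v])"
  let ?n = "length ps"
  have lastn: "last ps = ps ! (?n - 1)" using ne by (simp add: last_conv_nth)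
  have bl: "\<And>k. k < ?n - 1 \<Longrightarrow> ps ! k \<in> set (butlast ps)"
    using ne by (metis length_butlast nth_butlast nth_mem)
  consider "i < ?n" "j < ?n" | "i < ?n" "j = ?n" | "i = ?n" "j < ?n" | "i = ?n" "j = ?n"
    using i j by fastforce
  then show "R ((ps @ [v]) ! i) ((ps @ [v]) ! j) = (j = Suc i \<or> i = Suc j)"
  proof cases
    case 1 then show ?thesis using p unfolding ipath_def by (simp add: nth_append)
  next
    case 2
    show ?thesis
    proof (cases "i = ?n - 1")
      case True then show ?thesis using 2 l lastn ne by (simp add: nth_append)
    next
      case False
      then have "i < ?n - 1" using 2 by simp
      then show ?thesis using 2 o[OF bl] by (auto simp: nth_append)
    qed
  next
    case 3
    show ?thesis
    proof (cases "j = ?n - 1")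
      case True then show ?thesis using 3 l lastn ne by (simp add: nth_append)
    next
      case False
      then have "j < ?n - 1" using 3 by simp
      then show ?thesis using 3 o[OF bl] by (auto simp: nth_append)
    qed
  next
    case 4 then show ?thesis using v by (simp add: nth_append)
  qed
qed

lemma hole_close:
  assumes p: "ipath R ps" and len: "length ps \<ge> 3" and u: "u \<notin> set ps" "\<not> R u u"
    and h: "R u (hd ps)" "R (hd ps) u" and l: "R u (last ps)" "R (last ps) u"
    and o: "\<And>v. v \<in> set ps \<Longrightarrow> v \<noteq> hd ps \<Longrightarrow> v \<noteq> last ps \<Longrightarrow> \<not> R u v \<and> \<not> R v u"
    and S: "set (u # ps) \<subseteq> S"
  shows "hole_in S R (u # ps)"
  unfolding hole_in_def
proof (intro conjI allI impI)
  show "4 \<le> length (u # ps)" using len by simp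
  show "distinct (u # ps)" using p u unfolding ipath_def by simp
  show "set (u # ps) \<subseteq> S" by fact
  let ?n = "length ps"
  have ne[simp]: "ps \<noteq> []" using len by auto
  have hd0: "hd ps = ps ! 0" using ne by (simp add: hd_conv_nth)
  have lastn: "last ps = ps ! (?n - 1)" using ne by (simp add: last_conv_nth)
  have dps: "distinct ps" using p unfolding ipath_def by simp
  have mid: "\<And>k. 0 < k \<Longrightarrow> k < ?n - 1 \<Longrightarrow> ps ! k \<noteq> hd ps \<and> ps ! k \<noteq> last ps"
  proof -
    fix k assume k: "0 < k" "k < ?n - 1"
    have "ps ! k \<noteq> ps ! 0" "ps ! k \<noteq> ps ! (?n - 1)"
      using k ne nth_eq_iff_index_eq[OF dps, of k 0] nth_eq_iff_index_eq[OF dps, of k "?n - 1"] by auto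
    then show "ps ! k \<noteq> hd ps \<and> ps ! k \<noteq> last ps" using hd0 lastn by simp
  qed
  fix i j assume i: "i < length (u # ps)" and j: "j < length (u # ps)"
  have L: "length (u # ps) = Suc ?n" by simp
  consider "i = 0" "j = 0" | "i = 0" "j > 0" | "i > 0" "j = 0" | "i > 0" "j > 0" by fastforce
  then show "R ((u # ps) ! i) ((u # ps) ! j) =
        (j = Suc i mod length (u # ps) \<or> i = Suc j mod length (u # ps))"
  proof cases
    case 1 then show ?thesis using u len ne by simp
  next
    case 2
    then obtain j' where j': "j = Suc j'" by (cases j) auto
    have jl: "j' < ?n" using j j' by simp
    have "Suc 0 mod Suc ?n = 1" using len by simp
    then have e1: "(j = Suc i mod length (u # ps)) = (j' = 0)" using 2 j' by simp
    have e2: "(i = Suc j mod length (u # ps)) = (j' = ?n - 1)"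
      using 2 j' jl len by (auto simp: mod_Suc)
    show ?thesis
    proof (cases "j' = 0")
      case True then show ?thesis using 2 j' h hd0 e1 by simp
    next
      case False
      show ?thesis
      proof (cases "j' = ?n - 1")
        case True then show ?thesis using 2 j' l lastn e1 e2 by simp
      next
        case F2: False
        have "j' < ?n - 1" using jl F2 by simp
        then show ?thesis using 2 j' e1 e2 False F2 o[of "ps ! j'"] mid[of j'] jl by simp
      qed
    qed
  next
    case 3
    then obtain i' where i': "i = Suc i'" by (cases i) auto
    have il: "i' < ?n" using i i' by simp
    have e1: "(i = Suc j mod length (u # ps)) = (i' = 0)" using 3 i' len by simp
    have e2: "(j = Suc i mod length (u # ps)) = (i' = ?n - 1)"
      using 3 i' il len by (auto simp: mod_Suc)
    show ?thesis
    proof (cases "i' = 0")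
      case True then show ?thesis using 3 i' h hd0 e1 by simp
    next
      case False
      show ?thesis
      proof (cases "i' = ?n - 1")
        case True then show ?thesis using 3 i' l lastn e1 e2 by simp
      next
        case F2: False
        have "i' < ?n - 1" using il F2 by simp
        then show ?thesis using 3 i' e1 e2 False F2 o[of "ps ! i'"] mid[of i'] il by simp
      qed
    qed
  next
    case 4
    then obtain i' j' where i': "i = Suc i'" and j': "j = Suc j'"
      by (metis gr0_implies_Suc)
    have il: "i' < ?n" and jl: "j' < ?n" using i j i' j' by auto
    have e1: "(j = Suc i mod length (u # ps)) = (j' = Suc i')"
      using i' j' il jl by (auto simp: mod_Suc)
    have e2: "(i = Suc j mod length (u # ps)) = (i' = Suc j')"
      using i' j' il jl by (auto simp: mod_Suc)
    show ?thesis using p il jl i' j' e1 e2 unfolding ipath_def by simp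
  qed
qed

lemma hole_adj:
  assumes h: "hole_in S E cs" and i: "i < length cs" and j: "j < length cs"
  shows "E (cs!i) (cs!j) \<longleftrightarrow> (j = Suc i \<or> i = Suc j \<or> (i = 0 \<and> j = length cs - 1) \<or> (j = 0 \<and> i = length cs - 1))"
proof -
  have L: "length cs \<ge> 4" using h unfolding hole_in_def by simp
  have "E (cs!i) (cs!j) \<longleftrightarrow> (j = Suc i mod length cs \<or> i = Suc j mod length cs)"
    using h i j unfolding hole_in_def by blast
  also have "\<dots> \<longleftrightarrow> (j = Suc i \<or> i = Suc j \<or> (i = 0 \<and> j = length cs - 1) \<or> (j = 0 \<and> i = length cs - 1))"
    using i j L by (auto simp: mod_Suc)
  finally show ?thesis .
qed

lemma hole_len: "hole_in S E cs \<Longrightarrow> length cs \<ge> 4"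
  unfolding hole_in_def by simp

lemma hole_distinct: "hole_in S E cs \<Longrightarrow> distinct cs"
  unfolding hole_in_def by simp

lemma hole_set: "hole_in S E cs \<Longrightarrow> set cs \<subseteq> S"
  unfolding hole_in_def by simp

lemma hole_mono: "hole_in S E cs \<Longrightarrow> S \<subseteq> T \<Longrightarrow> hole_in T E cs"
  unfolding hole_in_def by auto

lemma hole_nth_eq:
  "hole_in S E cs \<Longrightarrow> i < length cs \<Longrightarrow> j < length cs \<Longrightarrow> cs!i = cs!j \<longleftrightarrow> i = j"
  using hole_distinct nth_eq_iff_index_eq by metis

lemma hole_rotate:
  assumes h: "hole_in S E cs" shows "hole_in S E (rotate m cs)"
  unfolding hole_in_def
proof (intro conjI allI impI)
  show "4 \<le> length (rotate m cs)" using h unfolding hole_in_def by simp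
  show "distinct (rotate m cs)" using h unfolding hole_in_def by simp
  show "set (rotate m cs) \<subseteq> S" using h unfolding hole_in_def by simp
  fix i j assume i: "i < length (rotate m cs)" and j: "j < length (rotate m cs)"
  let ?n = "length cs"
  have i': "i < ?n" and j': "j < ?n" using i j by auto
  have n0: "?n > 0" using i' by (rule gr_implies_not0[THEN not0_implies_Suc, THEN exE]) auto
  have cne: "cs \<noteq> []" using n0 by auto
  have "E (rotate m cs ! i) (rotate m cs ! j) = E (cs ! ((m + i) mod ?n)) (cs ! ((m + j) mod ?n))"
    using i' j' cne by (simp add: nth_rotate)
  also have "\<dots> = ((m + j) mod ?n = Suc ((m + i) mod ?n) mod ?n \<or> (m + i) mod ?n = Suc ((m + j) mod ?n) mod ?n)"
    using h n0 unfolding hole_in_def by simp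
  also have "\<dots> = ((m + j) mod ?n = (m + Suc i) mod ?n \<or> (m + i) mod ?n = (m + Suc j) mod ?n)"
    by (simp add: mod_Suc_eq)
  also have "\<dots> = (j mod ?n = Suc i mod ?n \<or> i mod ?n = Suc j mod ?n)"
    by (simp add: nat_mod_eq_iff)
  also have "\<dots> = (j = Suc i mod ?n \<or> i = Suc j mod ?n)" using i' j' by simp
  finally show "E (rotate m cs ! i) (rotate m cs ! j) = (j = Suc i mod length (rotate m cs) \<or> i = Suc j mod length (rotate m cs))"
    by simp
qed

lemma hole_rev:
  assumes h: "hole_in S E cs" shows "hole_in S E (rev cs)"
  unfolding hole_in_def
proof (intro conjI allI impI)
  show "4 \<le> length (rev cs)" using h unfolding hole_in_def by simp
  show "distinct (rev cs)" using h unfolding hole_in_def by simp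
  show "set (rev cs) \<subseteq> S" using h unfolding hole_in_def by simp
  fix i j assume i: "i < length (rev cs)" and j: "j < length (rev cs)"
  let ?n = "length cs"
  have i': "i < ?n" and j': "j < ?n" using i j by auto
  have L: "?n \<ge> 4" using h unfolding hole_in_def by simp
  have "E (rev cs ! i) (rev cs ! j) = E (cs ! (?n - Suc i)) (cs ! (?n - Suc j))"
    using i' j' by (simp add: rev_nth)
  also have "\<dots> = (?n - Suc j = Suc (?n - Suc i) \<or> ?n - Suc i = Suc (?n - Suc j) \<or>
       (?n - Suc i = 0 \<and> ?n - Suc j = ?n - 1) \<or> (?n - Suc j = 0 \<and> ?n - Suc i = ?n - 1))"
    using hole_adj[OF h, of "?n - Suc i" "?n - Suc j"] i' j' by simp
  also have "\<dots> = (j = Suc i \<or> i = Suc j \<or> (i = 0 \<and> j = ?n - 1) \<or> (j = 0 \<and> i = ?n - 1))"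
    using i' j' by auto
  also have "\<dots> = (j = Suc i mod ?n \<or> i = Suc j mod ?n)"
    using i' j' L by (auto simp: mod_Suc)
  finally show "E (rev cs ! i) (rev cs ! j) = (j = Suc i mod length (rev cs) \<or> i = Suc j mod length (rev cs))"
    by simp
qed

definition seg :: "'a list \<Rightarrow> nat \<Rightarrow> nat \<Rightarrow> 'a list" where
  "seg cs i j = map (\<lambda>k. cs ! (i + k)) [0..<Suc j - i]"

lemma seg_length[simp]: "length (seg cs i j) = Suc j - i"
  by (simp add: seg_def)

lemma seg_nth: "p < Suc j - i \<Longrightarrow> seg cs i j ! p = cs ! (i + p)"
  by (simp add: seg_def)

lemma seg_ne: "i \<le> j \<Longrightarrow> seg cs i j \<noteq> []"
  by (simp add: seg_def)

lemma seg_hd: "i \<le> j \<Longrightarrow> hd (seg cs i j) = cs ! i"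
  using seg_nth[of 0 j i cs] seg_ne[of i j cs] by (simp add: hd_conv_nth)

lemma seg_last: "i \<le> j \<Longrightarrow> last (seg cs i j) = cs ! j"
  using seg_nth[of "j - i" j i cs] seg_ne[of i j cs] by (simp add: last_conv_nth)

lemma set_seg: "set (seg cs i j) = (\<lambda>k. cs ! k) ` {i..j}"
proof -
  have "set (seg cs i j) = (\<lambda>k. cs ! (i + k)) ` {0..<Suc j - i}" by (simp add: seg_def)
  also have "\<dots> = (\<lambda>k. cs ! k) ` {i..j}"
  proof
    show "(\<lambda>k. cs ! (i + k)) ` {0..<Suc j - i} \<subseteq> (\<lambda>k. cs ! k) ` {i..j}" by auto
    show "(\<lambda>k. cs ! k) ` {i..j} \<subseteq> (\<lambda>k. cs ! (i + k)) ` {0..<Suc j - i}"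
    proof
      fix x assume "x \<in> (\<lambda>k. cs ! k) ` {i..j}"
      then obtain k where k: "i \<le> k" "k \<le> j" "x = cs ! k" by auto
      then have "x = cs ! (i + (k - i))" "k - i \<in> {0..<Suc j - i}" by auto
      then show "x \<in> (\<lambda>k. cs ! (i + k)) ` {0..<Suc j - i}" by blast
    qed
  qed
  finally show ?thesis .
qed

lemma butlast_seg: "i < j \<Longrightarrow> set (butlast (seg cs i j)) = (\<lambda>k. cs ! k) ` {i..<j}"
proof -
  assume ij: "i < j"
  have "seg cs i j = seg cs i (j - 1) @ [cs ! j]"
    unfolding seg_def using ij by (simp add: Suc_diff_le)
  then have "butlast (seg cs i j) = seg cs i (j - 1)" by simp
  then show ?thesis using ij by (auto simp: set_seg)
qed

lemma seg_ipath:
  assumes h: "hole_in S E cs" and ij: "i \<le> j" "j < length cs" and nw: "\<not> (i = 0 \<and> j = length cs - 1)"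
  shows "ipath E (seg cs i j)"
  unfolding ipath_def
proof (intro conjI allI impI)
  show "distinct (seg cs i j)" using h ij unfolding seg_def hole_in_def
    by (auto intro!: distinct_map[THEN iffD2] simp: inj_on_def nth_eq_iff_index_eq)
  fix p q assume p: "p < length (seg cs i j)" and q: "q < length (seg cs i j)"
  have p': "i + p \<le> j" and q': "i + q \<le> j" using p q by auto
  have "E (seg cs i j ! p) (seg cs i j ! q) = E (cs ! (i + p)) (cs ! (i + q))"
    using p q by (simp add: seg_nth)
  also have "\<dots> = (q = Suc p \<or> p = Suc q)"
    using hole_adj[OF h, of "i + p" "i + q"] p' q' ij nw by auto
  finally show "E (seg cs i j ! p) (seg cs i j ! q) = (q = Suc p \<or> p = Suc q)" .
qed

lemma seg_in_set: "i \<le> k \<Longrightarrow> k \<le> j \<Longrightarrow> cs ! k \<in> set (seg cs i j)"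
  by (auto simp: set_seg)


lemma compl_adj_sym: "compl_adj E x y \<Longrightarrow> (\<And>a b. E a b \<Longrightarrow> E b a) \<Longrightarrow> compl_adj E y x"
  unfolding compl_adj_def by blast

lemma compl_adj_irr: "\<not> compl_adj E x x"
  unfolding compl_adj_def by simp

locale bg =
  fixes V :: "'a set" and E :: "'a \<Rightarrow> 'a \<Rightarrow> bool"
  assumes berge: "berge V E"
begin

lemma sg: "simple_graph V E" using berge unfolding berge_def by simp
lemma sym: "E x y \<Longrightarrow> E y x" using sg unfolding simple_graph_def by blast
lemma irr: "\<not> E x x" using sg unfolding simple_graph_def by blast
lemma inV1: "E x y \<Longrightarrow> x \<in> V" using sg unfolding simple_graph_def by blast
lemma inV2: "E x y \<Longrightarrow> y \<in> V" using sg unfolding simple_graph_def by blast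
lemma finV: "finite V" using sg unfolding simple_graph_def by blast
lemma symE: "E x y \<longleftrightarrow> E y x" using sym by blast

lemma csym: "compl_adj E x y \<longleftrightarrow> compl_adj E y x"
  unfolding compl_adj_def using sym by blast

lemma even_hole: "hole_in V E cs \<Longrightarrow> even (length cs)"
  using berge unfolding berge_def by blast

lemma even_antihole: "hole_in V (compl_adj E) cs \<Longrightarrow> even (length cs)"
  using berge unfolding berge_def antihole_in_def by blast

lemma close_parity:
  assumes p: "ipath E ps" and len: "length ps \<ge> 3" and u: "u \<notin> set ps" "u \<in> V" and S: "set ps \<subseteq> V"
    and h: "E u (hd ps)" and l: "E u (last ps)"
    and o: "\<And>v. v \<in> set ps \<Longrightarrow> v \<noteq> hd ps \<Longrightarrow> v \<noteq> last ps \<Longrightarrow> \<not> E u v"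
  shows "odd (length ps)"
proof -
  have "hole_in V E (u # ps)"
    by (rule hole_close[OF p len u(1)]) (use irr sym h l o u S in auto)
  then have "even (length (u # ps))" by (rule even_hole)
  then show ?thesis by simp
qed

lemma close_parity_c:
  assumes p: "ipath (compl_adj E) ps" and len: "length ps \<ge> 3" and u: "u \<notin> set ps" "u \<in> V" and S: "set ps \<subseteq> V"
    and h: "compl_adj E u (hd ps)" and l: "compl_adj E u (last ps)"
    and o: "\<And>v. v \<in> set ps \<Longrightarrow> v \<noteq> hd ps \<Longrightarrow> v \<noteq> last ps \<Longrightarrow> \<not> compl_adj E u v"
  shows "odd (length ps)"
proof -
  have "hole_in V (compl_adj E) (u # ps)"
    by (rule hole_close[OF p len u(1)]) (use compl_adj_irr[of E] csym h l o u S in auto)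
  then have "even (length (u # ps))" by (rule even_antihole)
  then show ?thesis by simp
qed

lemma ipath_snoc_sym:
  assumes p: "ipath R ps" and ne: "ps \<noteq> []" and v: "v \<notin> set ps" "\<not> R v v"
    and sy: "\<And>a b. R a b \<longleftrightarrow> R b a"
    and l: "R (last ps) v"
    and o: "\<And>u. u \<in> set (butlast ps) \<Longrightarrow> \<not> R u v"
  shows "ipath R (ps @ [v])"
  by (rule ipath_snoc[OF p ne v]) (use l o sy in auto)

lemma f2_parity:
  assumes p: "ipath E ps" and ne: "ps \<noteq> []" and S: "set ps \<subseteq> V"
    and V3: "u \<in> V" "w \<in> V" "cl \<in> V"
    and nin: "u \<notin> set ps" "w \<notin> set ps" "cl \<notin> set ps"
    and dif: "u \<noteq> w" "u \<noteq> cl" "w \<noteq> cl"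
    and uh: "E u (hd ps)" and uo: "\<And>v. v \<in> set ps \<Longrightarrow> v \<noteq> hd ps \<Longrightarrow> \<not> E u v"
    and wl: "E w (last ps)" and wo: "\<And>v. v \<in> set (butlast ps) \<Longrightarrow> \<not> E w v"
    and uw: "\<not> E u w" and clu: "E cl u" and clw: "E cl w" and clo: "\<And>v. v \<in> set ps \<Longrightarrow> \<not> E cl v"
  shows "odd (length ps)"
proof -
  have p1: "ipath E (ps @ [w])"
    by (rule ipath_snoc_sym[OF p ne nin(2) irr symE]) (use wl wo sym in auto)
  have p2: "ipath E ((ps @ [w]) @ [cl])"
  proof (rule ipath_snoc_sym[OF p1 _ _ irr symE])
    show "ps @ [w] \<noteq> []" by simp
    show "cl \<notin> set (ps @ [w])" using nin dif by auto
    show "E (last (ps @ [w])) cl" using clw sym by simp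
    show "\<And>x. x \<in> set (butlast (ps @ [w])) \<Longrightarrow> \<not> E x cl" using clo sym by auto
  qed
  have "odd (length ((ps @ [w]) @ [cl]))"
  proof (rule close_parity[OF p2])
    show "3 \<le> length ((ps @ [w]) @ [cl])" using ne by (cases ps) auto
    show "u \<notin> set ((ps @ [w]) @ [cl])" using nin dif by auto
    show "u \<in> V" by fact
    show "set ((ps @ [w]) @ [cl]) \<subseteq> V" using S V3 by auto
    show "E u (hd ((ps @ [w]) @ [cl]))" using uh ne by simp
    show "E u (last ((ps @ [w]) @ [cl]))" using clu sym by simp
    fix v assume "v \<in> set ((ps @ [w]) @ [cl])" "v \<noteq> hd ((ps @ [w]) @ [cl])" "v \<noteq> last ((ps @ [w]) @ [cl])"
    then show "\<not> E u v" using uo uw ne by auto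
  qed
  then show ?thesis by simp
qed

end


definition units :: "nat set \<Rightarrow> nat \<Rightarrow> nat \<Rightarrow> nat" where
  "units K l r = card {i. l \<le> i \<and> i < r \<and> i \<in> K \<and> Suc i \<in> K}"

definition good :: "nat set \<Rightarrow> nat \<Rightarrow> nat \<Rightarrow> bool" where
  "good K s t \<longleftrightarrow> (\<forall>c c'. c \<in> K \<longrightarrow> c' \<in> K \<longrightarrow> s \<le> c \<longrightarrow> c < c' \<longrightarrow> c' \<le> t \<longrightarrow>
      (\<forall>i. c < i \<longrightarrow> i < c' \<longrightarrow> i \<notin> K) \<longrightarrow> c' = Suc c \<or> even (c' - c))"

lemma goodD: "good K s t \<Longrightarrow> c \<in> K \<Longrightarrow> c' \<in> K \<Longrightarrow> s \<le> c \<Longrightarrow> c < c' \<Longrightarrow> c' \<le> t \<Longrightarrow>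
      (\<And>i. c < i \<Longrightarrow> i < c' \<Longrightarrow> i \<notin> K) \<Longrightarrow> c' = Suc c \<or> even (c' - c)"
  unfolding good_def by blast

lemma units_add:
  assumes "l \<le> m" "m \<le> r" shows "units K l r = units K l m + units K m r"
proof -
  have "{i. l \<le> i \<and> i < r \<and> i \<in> K \<and> Suc i \<in> K} =
        {i. l \<le> i \<and> i < m \<and> i \<in> K \<and> Suc i \<in> K} \<union> {i. m \<le> i \<and> i < r \<and> i \<in> K \<and> Suc i \<in> K}"
    using assms by auto
  moreover have "finite {i. l \<le> i \<and> i < m \<and> i \<in> K \<and> Suc i \<in> K}" by (rule finite_subset[of _ "{..<m}"]) auto
  moreover have "finite {i. m \<le> i \<and> i < r \<and> i \<in> K \<and> Suc i \<in> K}" by (rule finite_subset[of _ "{..<r}"]) auto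
  moreover have "{i. l \<le> i \<and> i < m \<and> i \<in> K \<and> Suc i \<in> K} \<inter> {i. m \<le> i \<and> i < r \<and> i \<in> K \<and> Suc i \<in> K} = {}"
    by auto
  ultimately show ?thesis unfolding units_def by (simp add: card_Un_disjoint)
qed

lemma units_empty: "r \<le> l \<Longrightarrow> units K l r = 0"
  unfolding units_def by auto

lemma units_last_gap:
  assumes "c \<in> K" "c < r" "r \<in> K" "\<And>i. c < i \<Longrightarrow> i < r \<Longrightarrow> i \<notin> K"
  shows "units K c r = (if r = Suc c then 1 else 0)"
proof -
  have "{i. c \<le> i \<and> i < r \<and> i \<in> K \<and> Suc i \<in> K} = (if r = Suc c then {c} else {})"
  proof (cases "r = Suc c")
    case True then show ?thesis using assms by auto
  next
    case False
    have "\<And>i. c \<le> i \<Longrightarrow> i < r \<Longrightarrow> i \<in> K \<Longrightarrow> Suc i \<in> K \<Longrightarrow> False"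
    proof -
      fix i assume i: "c \<le> i" "i < r" "i \<in> K" "Suc i \<in> K"
      have "i = c" using assms(4)[of i] i by (cases "i = c") auto
      then show False using assms(4)[of "Suc c"] i False by auto
    qed
    then show ?thesis using False by auto
  qed
  then show ?thesis unfolding units_def by simp
qed

lemma P1:
  assumes g: "good K s t" and l: "l \<in> K" "s \<le> l"
  shows "r \<in> K \<Longrightarrow> l \<le> r \<Longrightarrow> r \<le> t \<Longrightarrow> (even (r - l) \<longleftrightarrow> even (units K l r))"
proof (induction r rule: less_induct)
  case (less r)
  show ?case
  proof (cases "r = l")
    case True then show ?thesis by (simp add: units_empty)
  next
    case False
    let ?M = "{i \<in> K. l \<le> i \<and> i < r}"
    have fin: "finite ?M" by (rule finite_subset[of _ "{..<r}"]) auto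
    have ne: "?M \<noteq> {}" using l less False by auto
    define c where "c = Max ?M"
    have c: "c \<in> K" "l \<le> c" "c < r" using Max_in[OF fin ne] unfolding c_def by auto
    have gap: "\<And>i. c < i \<Longrightarrow> i < r \<Longrightarrow> i \<notin> K"
      using Max_ge[OF fin] c unfolding c_def by fastforce
    have ih: "even (c - l) \<longleftrightarrow> even (units K l c)" using less.IH[of c] c less by auto
    have gc: "r = Suc c \<or> even (r - c)"
      by (rule goodD[OF g c(1) less(2)]) (use c l less gap in auto)
    have u: "units K l r = units K l c + units K c r" using c by (intro units_add) auto
    have uc: "units K c r = (if r = Suc c then 1 else 0)" by (rule units_last_gap[OF c(1) c(3) less(2) gap])
    have d: "r - l = (r - c) + (c - l)" using c by simp
    show ?thesis
    proof (cases "r = Suc c")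
      case True
      then have "units K l r = units K l c + 1" "r - l = Suc (c - l)" using u uc c by auto
      then show ?thesis using ih by simp
    next
      case F: False
      then have e: "even (r - c)" using gc by simp
      have "units K l r = units K l c" using u uc F by simp
      then show ?thesis using ih d e by simp
    qed
  qed
qed

lemma SUMU:
  assumes s: "s \<in> A" and A: "\<And>a. a \<in> A \<Longrightarrow> s \<le> a"
    and gaps: "\<And>a b. a \<in> A \<Longrightarrow> b \<in> A \<Longrightarrow> a < b \<Longrightarrow> b \<le> t \<Longrightarrow> (\<And>i. a < i \<Longrightarrow> i < b \<Longrightarrow> i \<notin> A) \<Longrightarrow> even (units K a b)"
  shows "r \<in> A \<Longrightarrow> r \<le> t \<Longrightarrow> even (units K s r)"
proof (induction r rule: less_induct)
  case (less r)
  show ?case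
  proof (cases "r = s")
    case True then show ?thesis by (simp add: units_empty)
  next
    case False
    let ?M = "{i \<in> A. i < r}"
    have fin: "finite ?M" by (rule finite_subset[of _ "{..<r}"]) auto
    have ne: "?M \<noteq> {}" using s A[OF less(2)] False by auto
    define c where "c = Max ?M"
    have c: "c \<in> A" "c < r" using Max_in[OF fin ne] unfolding c_def by auto
    have gap: "\<And>i. c < i \<Longrightarrow> i < r \<Longrightarrow> i \<notin> A"
      using Max_ge[OF fin] c unfolding c_def by fastforce
    have ih: "even (units K s c)" using less.IH[of c] c less by auto
    have u: "units K s r = units K s c + units K c r" using c A by (intro units_add) auto
    have "even (units K c r)" by (rule gaps[OF c(1) less(2) c(2) less(3) gap])
    then show ?thesis using ih u by simp
  qed
qed

lemma units_restrict:
  assumes "a \<le> a'" "a' \<le> b'" "b' \<le> b"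
    and "\<And>i. i \<in> K \<Longrightarrow> a \<le> i \<Longrightarrow> i \<le> b \<Longrightarrow> a' \<le> i \<and> i \<le> b'"
  shows "units K a b = units K a' b'"
proof -
  have "{i. a \<le> i \<and> i < b \<and> i \<in> K \<and> Suc i \<in> K} = {i. a' \<le> i \<and> i < b' \<and> i \<in> K \<and> Suc i \<in> K}"
  proof (intro set_eqI iffI)
    fix i assume "i \<in> {i. a \<le> i \<and> i < b \<and> i \<in> K \<and> Suc i \<in> K}"
    then have i: "a \<le> i" "i < b" "i \<in> K" "Suc i \<in> K" by auto
    have "a' \<le> i" using assms(4)[of i] i by auto
    moreover have "Suc i \<le> b'" using assms(4)[of "Suc i"] i by auto
    ultimately show "i \<in> {i. a' \<le> i \<and> i < b' \<and> i \<in> K \<and> Suc i \<in> K}" using i by auto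
  next
    fix i assume "i \<in> {i. a' \<le> i \<and> i < b' \<and> i \<in> K \<and> Suc i \<in> K}"
    then show "i \<in> {i. a \<le> i \<and> i < b \<and> i \<in> K \<and> Suc i \<in> K}" using assms by auto
  qed
  then show ?thesis unfolding units_def by simp
qed

lemma units_single:
  assumes "\<And>i. i \<in> K \<Longrightarrow> a \<le> i \<Longrightarrow> i \<le> b \<Longrightarrow> i = c"
  shows "units K a b = 0"
proof -
  have "{i. a \<le> i \<and> i < b \<and> i \<in> K \<and> Suc i \<in> K} = {}"
  proof (rule ccontr)
    assume "{i. a \<le> i \<and> i < b \<and> i \<in> K \<and> Suc i \<in> K} \<noteq> {}"
    then obtain i where i: "a \<le> i" "i < b" "i \<in> K" "Suc i \<in> K" by blast
    have "i = c" using assms[of i] i by simp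
    moreover have "Suc i = c" using assms[of "Suc i"] i by simp
    ultimately show False by simp
  qed
  then show ?thesis unfolding units_def by simp
qed

lemma two_set:
  fixes T1 T2 :: "nat set" and t :: nat
  assumes T1: "T1 \<subseteq> {0<..<t}" and T2: "T2 \<subseteq> {0<..<t}" and dis: "T1 \<inter> T2 = {}" and ne: "T1 \<noteq> {}"
    and g1: "good (insert 0 (insert t T1)) 0 t" and g2: "good (insert 0 (insert t T2)) 0 t"
    and c1: "\<And>i j. i \<in> T1 \<Longrightarrow> j \<in> T2 \<Longrightarrow> i < j \<Longrightarrow> (\<And>c. i < c \<Longrightarrow> c < j \<Longrightarrow> c \<notin> T1 \<and> c \<notin> T2) \<Longrightarrow> even (j - i)"
    and c2: "\<And>i j. i \<in> T1 \<Longrightarrow> j \<in> T2 \<Longrightarrow> j < i \<Longrightarrow> (\<And>c. j < c \<Longrightarrow> c < i \<Longrightarrow> c \<notin> T1 \<and> c \<notin> T2) \<Longrightarrow> even (i - j)"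
  shows "even t"
proof -
  define K1 where "K1 = insert 0 (insert t T1)"
  define K2 where "K2 = insert 0 (insert t T2)"
  have t0: "0 < t" using ne T1 by auto
  have gap: "even (units K2 a b)" if ab: "a \<in> K1" "b \<in> K1" "a < b" "b \<le> t"
      and gp: "\<And>i. a < i \<Longrightarrow> i < b \<Longrightarrow> i \<notin> K1" for a b
  proof -
    have aK: "a = 0 \<or> a \<in> T1" using ab T1 unfolding K1_def by auto
    have bK: "b = t \<or> b \<in> T1" using ab T1 unfolding K1_def by auto
    have nfull: "\<not> (a = 0 \<and> b = t)"
    proof
      assume "a = 0 \<and> b = t"
      moreover obtain x where "x \<in> T1" using ne by auto
      ultimately show False using gp[of x] T1 unfolding K1_def by auto
    qed
    have aT2: "a \<notin> T2" using aK dis T2 by auto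
    have bT2: "b \<notin> T2" using bK dis T2 by auto
    let ?M = "T2 \<inter> {a<..<b}"
    have Mch: "\<And>i. i \<in> T2 \<Longrightarrow> a \<le> i \<Longrightarrow> i \<le> b \<Longrightarrow> i \<in> ?M"
      using aT2 bT2 by (auto simp: le_less)
    show ?thesis
    proof (cases "?M = {}")
      case True
      show ?thesis
      proof (cases "a = 0")
        case True
        have "units K2 a b = 0"
          by (rule units_single[of K2 a b 0]) (use \<open>?M = {}\<close> Mch True nfull bK aT2 bT2 ab T2 dis in \<open>auto simp: K2_def\<close>)
        then show ?thesis by simp
      next
        case False
        have "units K2 a b = 0"
          by (rule units_single[of K2 a b t]) (use \<open>?M = {}\<close> Mch False aK bK aT2 bT2 ab T2 T1 dis in \<open>auto simp: K2_def\<close>)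
        then show ?thesis by simp
      qed
    next
      case False
      have finM: "finite ?M" by simp
      define f2 where "f2 = Min ?M"
      define l2 where "l2 = Max ?M"
      have f2: "f2 \<in> T2" "a < f2" "f2 < b" using Min_in[OF finM False] unfolding f2_def by auto
      have l2: "l2 \<in> T2" "a < l2" "l2 < b" using Max_in[OF finM False] unfolding l2_def by auto
      have f2min: "\<And>x. x \<in> T2 \<Longrightarrow> a < x \<Longrightarrow> x < b \<Longrightarrow> f2 \<le> x" using Min_le[OF finM] unfolding f2_def by auto
      have l2max: "\<And>x. x \<in> T2 \<Longrightarrow> a < x \<Longrightarrow> x < b \<Longrightarrow> x \<le> l2" using Max_ge[OF finM] unfolding l2_def by auto
      have fl: "f2 \<le> l2" using f2min[OF l2] by simp
      define a' where "a' = (if a = 0 then 0 else f2)"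
      define b' where "b' = (if b = t then t else l2)"
      have ord: "a \<le> a'" "a' \<le> b'" "b' \<le> b" using f2 l2 fl ab unfolding a'_def b'_def by auto
      have a'K: "a' \<in> K2" unfolding a'_def K2_def using f2 by auto
      have b'K: "b' \<in> K2" unfolding b'_def K2_def using l2 by auto
      have res: "units K2 a b = units K2 a' b'"
      proof (rule units_restrict[OF ord])
        fix i assume i: "i \<in> K2" "a \<le> i" "i \<le> b"
        show "a' \<le> i \<and> i \<le> b'"
        proof (cases "i \<in> T2")
          case True
          then have "a < i" "i < b" using i aT2 bT2 by (auto simp: le_less)
          then show ?thesis using f2min[OF True] l2max[OF True] unfolding a'_def b'_def by auto
        next
          case F: False
          then have "i = 0 \<or> i = t" using i unfolding K2_def by auto
          then show ?thesis using i ab nfull aK bK T1 t0 f2 l2 fl unfolding a'_def b'_def by auto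
        qed
      qed
      have eba: "even (b - a)"
      proof -
        have "b = Suc a \<or> even (b - a)"
          by (rule goodD[OF g1]) (use ab gp in \<open>auto simp: K1_def\<close>)
        then show ?thesis using f2 by auto
      qed
      have ea: "even (a' - a)"
      proof (cases "a = 0")
        case True then show ?thesis unfolding a'_def by simp
      next
        case F: False
        then have aT1: "a \<in> T1" using aK by simp
        have "even (f2 - a)"
        proof (rule c1[OF aT1 f2(1) f2(2)])
          fix c assume c: "a < c" "c < f2"
          have "c \<notin> K1" using gp c f2 by auto
          moreover have "c \<notin> T2" using f2min c f2 by fastforce
          ultimately show "c \<notin> T1 \<and> c \<notin> T2" unfolding K1_def by auto
        qed
        then show ?thesis using F unfolding a'_def by simp
      qed
      have eb: "even (b - b')"
      proof (cases "b = t")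
        case True then show ?thesis unfolding b'_def by simp
      next
        case F: False
        then have bT1: "b \<in> T1" using bK by simp
        have "even (b - l2)"
        proof (rule c2[OF bT1 l2(1) l2(3)])
          fix c assume c: "l2 < c" "c < b"
          have "c \<notin> K1" using gp c l2 by auto
          moreover have "c \<notin> T2" using l2max c l2 by fastforce
          ultimately show "c \<notin> T1 \<and> c \<notin> T2" unfolding K1_def by auto
        qed
        then show ?thesis using F unfolding b'_def by simp
      qed
      have "b - a = (a' - a) + (b' - a') + (b - b')" using ord by simp
      then have "even (b' - a')" using eba ea eb by simp
      moreover have "even (b' - a') \<longleftrightarrow> even (units K2 a' b')"
        by (rule P1[OF g2[folded K2_def] a'K _ b'K ord(2)]) (use ord ab in auto)
      ultimately show ?thesis using res by simp
    qed
  qed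
  have "even (units K2 0 t)"
    by (rule SUMU[of 0 K1 t K2 t]) (use gap t0 in \<open>auto simp: K1_def\<close>)
  moreover have "even (t - 0) \<longleftrightarrow> even (units K2 0 t)"
    by (rule P1[OF g2[folded K2_def]]) (auto simp: K2_def)
  ultimately show ?thesis by simp
qed


definition rY :: "('a \<Rightarrow> 'a \<Rightarrow> bool) \<Rightarrow> 'a set \<Rightarrow> 'a \<Rightarrow> 'a \<Rightarrow> bool" where
  "rY G Y a b \<longleftrightarrow> a \<in> Y \<and> b \<in> Y \<and> G a b"

definition conn :: "('a \<Rightarrow> 'a \<Rightarrow> bool) \<Rightarrow> 'a set \<Rightarrow> bool" where
  "conn G Y \<longleftrightarrow> Y \<noteq> {} \<and> (\<forall>x\<in>Y. \<forall>y\<in>Y. (rY G Y)\<^sup>*\<^sup>* x y)"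

lemma anticonnected_conn: "anticonnected E Y \<longleftrightarrow> conn (compl_adj E) Y"
  unfolding anticonnected_def conn_def rY_def by simp

lemma rY_mono: "(rY G Y)\<^sup>*\<^sup>* a b \<Longrightarrow> Y \<subseteq> Z \<Longrightarrow> (rY G Z)\<^sup>*\<^sup>* a b"
proof (induction rule: rtranclp_induct)
  case base then show ?case by simp
next
  case (step y z) then show ?case
    by (metis (no_types, lifting) rY_def rtranclp.rtrancl_into_rtrancl subsetD)
qed

lemma walk_of_relpow:
  "(R ^^ n) x y \<Longrightarrow> \<exists>xs. length xs = Suc n \<and> xs ! 0 = x \<and> xs ! n = y \<and> (\<forall>i<n. R (xs ! i) (xs ! Suc i))"
proof (induction n arbitrary: y)
  case 0 then show ?case by (intro exI[of _ "[x]"]) simp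
next
  case (Suc n)
  from Suc.prems obtain z where z: "(R ^^ n) x z" "R z y" by auto
  from Suc.IH[OF z(1)] obtain xs where xs: "length xs = Suc n" "xs ! 0 = x" "xs ! n = z" "\<forall>i<n. R (xs ! i) (xs ! Suc i)" by blast
  show ?case
  proof (intro exI[of _ "xs @ [y]"] conjI allI impI)
    show "length (xs @ [y]) = Suc (Suc n)" using xs by simp
    show "(xs @ [y]) ! 0 = x" using xs by (simp add: nth_append)
    show "(xs @ [y]) ! Suc n = y" using xs by (simp add: nth_append)
    fix i assume i: "i < Suc n"
    show "R ((xs @ [y]) ! i) ((xs @ [y]) ! Suc i)"
    proof (cases "i = n")
      case True then show ?thesis using xs z by (simp add: nth_append)
    next
      case False then show ?thesis using xs i by (simp add: nth_append)
    qed
  qed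
qed

lemma relpow_of_walk:
  assumes w: "\<forall>i<n. R (xs ! i) (xs ! Suc i)"
  shows "i \<le> j \<Longrightarrow> j \<le> n \<Longrightarrow> (R ^^ (j - i)) (xs ! i) (xs ! j)"
proof (induction j)
  case 0 then show ?case by simp
next
  case (Suc j)
  show ?case
  proof (cases "i = Suc j")
    case True then show ?thesis by simp
  next
    case False
    then have "i \<le> j" using Suc by simp
    then have "(R ^^ (j - i)) (xs ! i) (xs ! j)" using Suc by simp
    moreover have "R (xs ! j) (xs ! Suc j)" using w Suc by simp
    ultimately have "(R ^^ Suc (j - i)) (xs ! i) (xs ! Suc j)" by auto
    moreover have "Suc (j - i) = Suc j - i" using \<open>i \<le> j\<close> by simp
    ultimately show ?thesis by simp
  qed
qed

lemma relpow_trans: "(R ^^ m) x z \<Longrightarrow> (R ^^ k) z y \<Longrightarrow> (R ^^ (m + k)) x y"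
  unfolding relpowp_add by auto

locale sgraph =
  fixes G :: "'a \<Rightarrow> 'a \<Rightarrow> bool"
  assumes gsym: "G a b \<Longrightarrow> G b a" and girr: "\<not> G a a"
begin

lemma rY_sym: "rY G Y a b \<Longrightarrow> rY G Y b a" unfolding rY_def using gsym by blast

lemma rtr_sym: "(rY G Y)\<^sup>*\<^sup>* a b \<Longrightarrow> (rY G Y)\<^sup>*\<^sup>* b a"
proof (induction rule: rtranclp_induct)
  case base then show ?case by simp
next
  case (step y z)
  then show ?case by (meson rY_sym converse_rtranclp_into_rtranclp)
qed

lemma ipath_conn:
  assumes p: "ipath G qs" and ne: "qs \<noteq> []"
  shows "conn G (set qs)"
proof -
  have step: "\<And>i. Suc i < length qs \<Longrightarrow> rY G (set qs) (qs ! i) (qs ! Suc i)"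
    using p unfolding ipath_def rY_def by auto
  have reach: "\<And>j. j < length qs \<Longrightarrow> (rY G (set qs))\<^sup>*\<^sup>* (qs ! 0) (qs ! j)"
  proof -
    fix j show "j < length qs \<Longrightarrow> (rY G (set qs))\<^sup>*\<^sup>* (qs ! 0) (qs ! j)"
    proof (induction j)
      case 0 then show ?case by simp
    next
      case (Suc j) then show ?case using step[of j] by (meson Suc_lessD rtranclp.rtrancl_into_rtrancl)
    qed
  qed
  show ?thesis unfolding conn_def
  proof (intro conjI ballI)
    show "set qs \<noteq> {}" using ne by simp
    fix x y assume "x \<in> set qs" "y \<in> set qs"
    then obtain i j where "i < length qs" "j < length qs" "x = qs ! i" "y = qs ! j" by (metis in_set_conv_nth)
    then show "(rY G (set qs))\<^sup>*\<^sup>* x y" using reach rtr_sym by (meson rtranclp_trans)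
  qed
qed

lemma shortest_walk:
  assumes c: "conn G Y" and x: "x \<in> Y" and y: "y \<in> Y"
  shows "\<exists>qs. ipath G qs \<and> set qs \<subseteq> Y \<and> qs \<noteq> [] \<and> hd qs = x \<and> last qs = y"
proof -
  let ?R = "rY G Y"
  have "?R\<^sup>*\<^sup>* x y" using c x y unfolding conn_def by simp
  then obtain n0 where "(?R ^^ n0) x y" by (metis rtranclp_imp_relpowp)
  define n where "n = (LEAST n. (?R ^^ n) x y)"
  have rn: "(?R ^^ n) x y" unfolding n_def by (rule LeastI[of _ n0]) fact
  have nmin: "\<And>m. (?R ^^ m) x y \<Longrightarrow> n \<le> m" unfolding n_def by (rule Least_le)
  obtain xs where xs: "length xs = Suc n" "xs ! 0 = x" "xs ! n = y" "\<forall>i<n. ?R (xs ! i) (xs ! Suc i)"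
    using walk_of_relpow[OF rn] by (elim exE conjE) (rule that)
  have seg: "\<And>i j. i \<le> j \<Longrightarrow> j \<le> n \<Longrightarrow> (?R ^^ (j - i)) (xs ! i) (xs ! j)"
    by (rule relpow_of_walk[OF xs(4)])
  have short: "\<And>i j. i < j \<Longrightarrow> j \<le> n \<Longrightarrow> (?R ^^ (i + (n - j))) x y \<Longrightarrow> False"
  proof -
    fix i j assume "i < j" "j \<le> n" "(?R ^^ (i + (n - j))) x y"
    then have "n \<le> i + (n - j)" using nmin by blast
    then show False using \<open>i < j\<close> \<open>j \<le> n\<close> by simp
  qed
  have inY: "\<And>i. i \<le> n \<Longrightarrow> xs ! i \<in> Y"
  proof -
    fix i assume i: "i \<le> n"
    show "xs ! i \<in> Y"
    proof (cases "i = n")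
      case True then show ?thesis using xs y by simp
    next
      case False then show ?thesis using xs(4) i unfolding rY_def by auto
    qed
  qed
  have dist: "distinct xs"
  proof (rule ccontr)
    assume "\<not> distinct xs"
    then obtain i0 j0 where ij0: "i0 < length xs" "j0 < length xs" "i0 \<noteq> j0" "xs ! i0 = xs ! j0"
      unfolding distinct_conv_nth by blast
    define i where "i = min i0 j0"
    define j where "j = max i0 j0"
    have ij: "i < j" "j < length xs" "xs ! i = xs ! j"
      using ij0 unfolding i_def j_def by (auto simp: min_def max_def)
    have "(?R ^^ i) x (xs ! i)" using seg[of 0 i] ij xs by simp
    moreover have "(?R ^^ (n - j)) (xs ! j) y" using seg[of j n] ij xs by simp
    ultimately have "(?R ^^ (i + (n - j))) x y" using ij(3) relpow_trans by metis
    moreover have "j \<le> n" using ij xs by simp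
    ultimately show False using short[of i j] ij(1) by blast
  qed
  have nonadj: "\<And>i j. i < length xs \<Longrightarrow> j < length xs \<Longrightarrow> Suc i < j \<Longrightarrow> \<not> G (xs ! i) (xs ! j)"
  proof
    fix i j assume ij: "i < length xs" "j < length xs" "Suc i < j" and g: "G (xs ! i) (xs ! j)"
    have "?R (xs ! i) (xs ! j)" using g inY ij xs unfolding rY_def by simp
    moreover have "(?R ^^ i) x (xs ! i)" using seg[of 0 i] ij xs by simp
    moreover have "(?R ^^ (n - j)) (xs ! j) y" using seg[of j n] ij xs by simp
    ultimately have "(?R ^^ (Suc i + (n - j))) x y"
    proof -
      assume a: "?R (xs ! i) (xs ! j)" "(?R ^^ i) x (xs ! i)" "(?R ^^ (n - j)) (xs ! j) y"
      have "(?R ^^ Suc i) x (xs ! j)" by (rule relpowp_Suc_I[OF a(2) a(1)])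
      then show ?thesis using a(3) by (rule relpow_trans)
    qed
    moreover have "j \<le> n" using ij xs by simp
    ultimately show False using short[of "Suc i" j] ij(3) by blast
  qed
  have ip: "ipath G xs"
    unfolding ipath_def
  proof (intro conjI allI impI)
    show "distinct xs" by fact
    fix i j assume i: "i < length xs" and j: "j < length xs"
    show "G (xs ! i) (xs ! j) = (j = Suc i \<or> i = Suc j)"
    proof
      assume g: "G (xs ! i) (xs ! j)"
      show "j = Suc i \<or> i = Suc j"
      proof (rule ccontr)
        assume ne: "\<not> (j = Suc i \<or> i = Suc j)"
        consider "i = j" | "Suc i < j" | "Suc j < i" using ne by linarith
        then show False
        proof cases
          case 1 then show False using g girr by simp
        next
          case 2 then show False using nonadj i j g by blast
        next
          case 3 then show False using nonadj[of j i] i j g gsym by blast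
        qed
      qed
    next
      assume "j = Suc i \<or> i = Suc j"
      then show "G (xs ! i) (xs ! j)"
      proof
        assume "j = Suc i" then show ?thesis using xs(4) i j xs(1) unfolding rY_def by auto
      next
        assume "i = Suc j" then show ?thesis using xs(4) i j xs(1) gsym unfolding rY_def by auto
      qed
    qed
  qed
  have "set xs \<subseteq> Y" using inY xs(1) by (auto simp: in_set_conv_nth)
  moreover have "xs \<noteq> []" using xs by auto
  moreover have "hd xs = x" using xs by (cases xs) auto
  moreover have "last xs = y" using xs last_conv_nth[of xs] by (cases xs) auto
  ultimately show ?thesis using ip by blast
qed


definition dS :: "'a set \<Rightarrow> 'a set \<Rightarrow> 'a \<Rightarrow> nat" where
  "dS Y S u = (LEAST n. \<exists>b\<in>S. (rY G Y ^^ n) u b)"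

lemma dS_attained:
  assumes c: "conn G Y" and S: "S \<subseteq> Y" "S \<noteq> {}" and u: "u \<in> Y"
  shows "\<exists>b\<in>S. (rY G Y ^^ dS Y S u) u b"
proof -
  obtain b where b: "b \<in> S" using S by auto
  have "(rY G Y)\<^sup>*\<^sup>* u b" using c u b S unfolding conn_def by auto
  then obtain n where "(rY G Y ^^ n) u b" by (metis rtranclp_imp_relpowp)
  then have "\<exists>b\<in>S. (rY G Y ^^ n) u b" using b by blast
  then show ?thesis unfolding dS_def by (rule LeastI_ex[OF exI])
qed

lemma dS_le: "b \<in> S \<Longrightarrow> (rY G Y ^^ m) u b \<Longrightarrow> dS Y S u \<le> m"
  unfolding dS_def by (rule Least_le) blast

lemma dS_zero_iff:
  assumes c: "conn G Y" and S: "S \<subseteq> Y" "S \<noteq> {}" and u: "u \<in> Y"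
  shows "dS Y S u = 0 \<longleftrightarrow> u \<in> S"
proof
  assume "dS Y S u = 0"
  then show "u \<in> S" using dS_attained[OF c S u] by auto
next
  assume "u \<in> S"
  then have "dS Y S u \<le> 0" by (intro dS_le[of u]) auto
  then show "dS Y S u = 0" by simp
qed

lemma dS_step:
  assumes c: "conn G Y" and S: "S \<subseteq> Y" "S \<noteq> {}" and u: "u \<in> Y" and d: "dS Y S u = Suc m"
  shows "\<exists>c. rY G Y u c \<and> dS Y S c \<le> m"
proof -
  obtain b where b: "b \<in> S" "(rY G Y ^^ Suc m) u b" using dS_attained[OF c S u] d by auto
  then obtain c where "rY G Y u c" "(rY G Y ^^ m) c b" using relpowp_Suc_D2 by metis
  then show ?thesis using dS_le[OF b(1)] by blast
qed

lemma farthest_noncut: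
  assumes c: "conn G Y" and S: "S \<subseteq> Y" "S \<noteq> {}" and v: "v \<in> Y" "v \<notin> S"
    and far: "\<And>u. u \<in> Y \<Longrightarrow> dS Y S u \<le> dS Y S v"
    and Sc: "\<And>a b. a \<in> S \<Longrightarrow> b \<in> S \<Longrightarrow> (rY G (Y - {v}))\<^sup>*\<^sup>* a b"
  shows "conn G (Y - {v})"
proof -
  have reach: "\<And>u. u \<in> Y - {v} \<Longrightarrow> \<exists>b\<in>S. (rY G (Y - {v}))\<^sup>*\<^sup>* u b"
  proof -
    have "\<forall>u. dS Y S u = k \<longrightarrow> u \<in> Y - {v} \<longrightarrow> (\<exists>b\<in>S. (rY G (Y - {v}))\<^sup>*\<^sup>* u b)" for k
    proof (induction k rule: less_induct)
      case (less k)
      show ?case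
      proof (intro allI impI)
        fix u assume du: "dS Y S u = k" and u: "u \<in> Y - {v}"
        show "\<exists>b\<in>S. (rY G (Y - {v}))\<^sup>*\<^sup>* u b"
        proof (cases k)
          case 0 then have "u \<in> S" using dS_zero_iff[OF c S] u du by auto
          then show ?thesis by blast
        next
          case (Suc m)
          obtain w where w: "rY G Y u w" "dS Y S w \<le> m" using dS_step[OF c S _ ] u du Suc by blast
          have wv: "w \<noteq> v"
          proof
            assume "w = v"
            then have "dS Y S v \<le> m" using w by simp
            moreover have "dS Y S u \<le> dS Y S v" using far u by auto
            ultimately show False using du Suc by simp
          qed
          have wY: "w \<in> Y - {v}" using w wv unfolding rY_def by auto
          have "\<exists>b\<in>S. (rY G (Y - {v}))\<^sup>*\<^sup>* w b" using less.IH[of "dS Y S w"] w Suc wY by auto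
          moreover have "rY G (Y - {v}) u w" using w u wY unfolding rY_def by auto
          ultimately show ?thesis by (meson converse_rtranclp_into_rtranclp)
        qed
      qed
    qed
    then show "\<And>u. u \<in> Y - {v} \<Longrightarrow> \<exists>b\<in>S. (rY G (Y - {v}))\<^sup>*\<^sup>* u b" by blast
  qed
  show ?thesis unfolding conn_def
  proof (intro conjI ballI)
    show "Y - {v} \<noteq> {}" using S v by auto
    fix a b assume a: "a \<in> Y - {v}" and b: "b \<in> Y - {v}"
    obtain sa where sa: "sa \<in> S" "(rY G (Y - {v}))\<^sup>*\<^sup>* a sa" using reach[OF a] by blast
    obtain sb where sb: "sb \<in> S" "(rY G (Y - {v}))\<^sup>*\<^sup>* b sb" using reach[OF b] by blast
    have "(rY G (Y - {v}))\<^sup>*\<^sup>* sa sb" using Sc sa sb by blast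
    moreover have "(rY G (Y - {v}))\<^sup>*\<^sup>* sb b" using rtr_sym[OF sb(2)] .
    ultimately show "(rY G (Y - {v}))\<^sup>*\<^sup>* a b" using sa(2) by (meson rtranclp_trans)
  qed
qed

lemma exists_noncut_far:
  assumes c: "conn G Y" and fin: "finite Y" and S: "S \<subseteq> Y" "S \<noteq> {}" "S \<noteq> Y"
    and Sc: "\<And>v a b. v \<in> Y - S \<Longrightarrow> a \<in> S \<Longrightarrow> b \<in> S \<Longrightarrow> (rY G (Y - {v}))\<^sup>*\<^sup>* a b"
  shows "\<exists>v\<in>Y - S. conn G (Y - {v})"
proof -
  have ne: "Y \<noteq> {}" using S by auto
  obtain v where v: "v \<in> Y" "dS Y S v = Max (dS Y S ` Y)"
    using Max_in[of "dS Y S ` Y"] fin ne by (metis (no_types, lifting) finite_imageI image_iff image_is_empty)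
  have far: "\<And>u. u \<in> Y \<Longrightarrow> dS Y S u \<le> dS Y S v" using v fin by simp
  obtain u where u: "u \<in> Y" "u \<notin> S" using S by auto
  have "dS Y S u \<noteq> 0" using dS_zero_iff[OF c S(1,2) u(1)] u by simp
  then have "dS Y S v \<noteq> 0" using far[OF u(1)] by simp
  then have vS: "v \<notin> S" using dS_zero_iff[OF c S(1,2) v(1)] by simp
  have "conn G (Y - {v})" by (rule farthest_noncut[OF c S(1,2) v(1) vS far]) (use Sc v vS in auto)
  then show ?thesis using v vS by blast
qed

lemma noncut_struct:
  assumes c: "conn G Y" and fin: "finite Y" and ab: "a \<in> Y" "b \<in> Y" "a \<noteq> b"
  shows "(\<exists>u1 u2 u3. u1 \<in> Y \<and> u2 \<in> Y \<and> u3 \<in> Y \<and> u1 \<noteq> u2 \<and> u1 \<noteq> u3 \<and> u2 \<noteq> u3 \<and>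
           conn G (Y - {u1}) \<and> conn G (Y - {u2}) \<and> conn G (Y - {u3}))
       \<or> (\<exists>qs. ipath G qs \<and> set qs = Y \<and> 2 \<le> length qs)"
proof -
  have single: "\<And>r. r \<in> Y \<Longrightarrow> \<exists>v\<in>Y - {r}. conn G (Y - {v})"
  proof -
    fix r assume r: "r \<in> Y"
    have "{r} \<noteq> Y" using ab by auto
    then show "\<exists>v\<in>Y - {r}. conn G (Y - {v})"
      by (intro exists_noncut_far[OF c fin]) (use r in auto)
  qed
  obtain x1 where x1: "x1 \<in> Y" "x1 \<noteq> a" "conn G (Y - {x1})" using single[OF ab(1)] by blast
  obtain x2 where x2: "x2 \<in> Y" "x2 \<noteq> x1" "conn G (Y - {x2})" using single[OF x1(1)] by blast
  obtain qs where qs: "ipath G qs" "set qs \<subseteq> Y" "qs \<noteq> []" "hd qs = x1" "last qs = x2"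
    using shortest_walk[OF c x1(1) x2(1)] by blast
  have x12: "x1 \<in> set qs" "x2 \<in> set qs" using qs by auto
  show ?thesis
  proof (cases "set qs = Y")
    case True
    have "2 \<le> length qs"
    proof (rule ccontr)
      assume "\<not> 2 \<le> length qs"
      then have "length qs \<le> 1" by simp
      then have "hd qs = last qs" using qs(3) by (cases qs) auto
      then show False using qs x2 by simp
    qed
    then show ?thesis using True qs by blast
  next
    case False
    have cq: "conn G (set qs)" by (rule ipath_conn[OF qs(1) qs(3)])
    have "\<exists>v\<in>Y - set qs. conn G (Y - {v})"
    proof (rule exists_noncut_far[OF c fin qs(2)])
      show "set qs \<noteq> {}" using qs by simp
      show "set qs \<noteq> Y" by fact
      fix v a b assume "v \<in> Y - set qs" "a \<in> set qs" "b \<in> set qs"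
      then show "(rY G (Y - {v}))\<^sup>*\<^sup>* a b"
        using cq qs(2) rY_mono[of G "set qs" a b "Y - {v}"] unfolding conn_def by auto
    qed
    then obtain v where v: "v \<in> Y" "v \<notin> set qs" "conn G (Y - {v})" by blast
    have "x1 \<noteq> v" "x2 \<noteq> v" using v x12 by auto
    then show ?thesis using x1 x2 v by blast
  qed
qed

end


lemma in_tl: "distinct qs \<Longrightarrow> v \<in> set qs \<Longrightarrow> v \<noteq> hd qs \<Longrightarrow> v \<in> set (tl qs)"
  by (cases qs) auto

lemma in_butlast: "v \<in> set qs \<Longrightarrow> v \<noteq> last qs \<Longrightarrow> v \<in> set (butlast qs)"
  by (induction qs) (auto split: if_splits)

context bg
begin

definition Outc :: "'a set \<Rightarrow> 'a list \<Rightarrow> bool" where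
  "Outc Y cs \<longleftrightarrow> (\<exists>x\<in>Y. \<forall>i < length cs. E x (cs ! i) \<longleftrightarrow> (i = 0 \<or> i = length cs - 1))
     \<or> (\<exists>a\<in>Y. \<exists>b\<in>Y. \<not> E a b \<and>
          (\<forall>i < length cs. E a (cs ! i) \<longleftrightarrow> (i = 0 \<or> i = 1 \<or> i = length cs - 1)) \<and>
          (\<forall>i < length cs. E b (cs ! i) \<longleftrightarrow> (i = 0 \<or> i = length cs - 2 \<or> i = length cs - 1)))"

definition Acore :: "'a set \<Rightarrow> bool" where
  "Acore Y \<longleftrightarrow> (\<forall>cs t r. hole_in (V - Y) E cs \<longrightarrow> 0 < t \<longrightarrow> t < r \<longrightarrow> r < length cs \<longrightarrow>
      complete_to E Y (cs!0) \<longrightarrow> complete_to E Y (cs!t) \<longrightarrow> complete_to E Y (cs!r) \<longrightarrow>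
      (\<forall>i. 0 < i \<and> i < t \<longrightarrow> \<not> complete_to E Y (cs!i)) \<longrightarrow> t = 1 \<or> even t)"

definition Bst :: "'a set \<Rightarrow> bool" where
  "Bst Y \<longleftrightarrow> (\<forall>cs. hole_in (V - Y) E cs \<longrightarrow> length cs > 4 \<longrightarrow>
      complete_to E Y (cs!0) \<longrightarrow> complete_to E Y (cs!(length cs - 1)) \<longrightarrow>
      (\<forall>i. 0 < i \<and> i < length cs - 1 \<longrightarrow> \<not> complete_to E Y (cs!i)) \<longrightarrow> Outc Y cs)"

lemma Outc_mono: "Outc Y' cs \<Longrightarrow> Y' \<subseteq> Y \<Longrightarrow> Outc Y cs"
  unfolding Outc_def by blast

lemma f3:
  assumes p: "ipath (compl_adj E) qs" and k: "2 \<le> length qs" and S: "set qs \<subseteq> V"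
    and vV: "vi \<in> V" "vj \<in> V" and nin: "vi \<notin> set qs" "vj \<notin> set qs" and dif: "vi \<noteq> vj"
    and nij: "\<not> E vi vj" and mi: "\<not> E vi (hd qs)" "\<And>q. q \<in> set (tl qs) \<Longrightarrow> E vi q"
    and mj: "\<not> E vj (last qs)" "\<And>q. q \<in> set (butlast qs) \<Longrightarrow> E vj q"
  shows "even (length qs)"
proof -
  have ne: "qs \<noteq> []" using k by auto
  have dq: "distinct qs" using p unfolding ipath_def by simp
  have p1: "ipath (compl_adj E) (qs @ [vj])"
  proof (rule ipath_snoc_sym[OF p ne nin(2) compl_adj_irr csym])
    have "last qs \<in> set qs" using ne by simp
    then show "compl_adj E (last qs) vj" using mj(1) nin symE[of vj "last qs"] unfolding compl_adj_def by auto
    show "\<not> compl_adj E u vj" if "u \<in> set (butlast qs)" for u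
    proof -
      have "E vj u" by (rule mj(2)[OF that])
      then have "E u vj" by (rule sym)
      then show ?thesis unfolding compl_adj_def by simp
    qed
  qed
  have "odd (length (qs @ [vj]))"
  proof (rule close_parity_c[OF p1])
    show "3 \<le> length (qs @ [vj])" using k by simp
    show "vi \<notin> set (qs @ [vj])" using nin dif by simp
    show "vi \<in> V" by fact
    show "set (qs @ [vj]) \<subseteq> V" using S vV by simp
    show "compl_adj E vi (hd (qs @ [vj]))"
    proof -
      have "hd qs \<in> set qs" using ne by simp
      then have "vi \<noteq> hd qs" using nin by auto
      then show ?thesis using mi(1) ne unfolding compl_adj_def by simp
    qed
    show "compl_adj E vi (last (qs @ [vj]))" using nij dif unfolding compl_adj_def by simp
    fix v assume v: "v \<in> set (qs @ [vj])" "v \<noteq> hd (qs @ [vj])" "v \<noteq> last (qs @ [vj])"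
    have "v \<in> set qs" using v(1) v(3) by simp
    moreover have "v \<noteq> hd qs" using v(2) ne by simp
    ultimately have "v \<in> set (tl qs)" by (rule in_tl[OF dq])
    then have "E vi v" by (rule mi(2))
    then show "\<not> compl_adj E vi v" unfolding compl_adj_def by simp
  qed
  then show ?thesis by simp
qed

lemma f4:
  assumes p: "ipath (compl_adj E) qs" and k: "2 \<le> length qs" and S: "set qs \<subseteq> V"
    and vV: "vi \<in> V" "vj \<in> V" "cl \<in> V" and nin: "vi \<notin> set qs" "vj \<notin> set qs" "cl \<notin> set qs"
    and dif: "vi \<noteq> vj" "cl \<noteq> vi" "cl \<noteq> vj"
    and eij: "E vi vj" and mi: "\<not> E vi (hd qs)" "\<And>q. q \<in> set (tl qs) \<Longrightarrow> E vi q"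
    and mj: "\<not> E vj (last qs)" "\<And>q. q \<in> set (butlast qs) \<Longrightarrow> E vj q"
    and clq: "\<And>q. q \<in> set qs \<Longrightarrow> E cl q" and cli: "\<not> E cl vi" and clj: "\<not> E cl vj"
  shows "odd (length qs)"
proof -
  have ne: "qs \<noteq> []" using k by auto
  have dq: "distinct qs" using p unfolding ipath_def by simp
  have p1: "ipath (compl_adj E) (qs @ [vj])"
  proof (rule ipath_snoc_sym[OF p ne nin(2) compl_adj_irr csym])
    have "last qs \<in> set qs" using ne by simp
    then show "compl_adj E (last qs) vj" using mj(1) nin symE[of vj "last qs"] unfolding compl_adj_def by auto
    show "\<not> compl_adj E u vj" if "u \<in> set (butlast qs)" for u
    proof -
      have "E vj u" by (rule mj(2)[OF that])
      then have "E u vj" by (rule sym)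
      then show ?thesis unfolding compl_adj_def by simp
    qed
  qed
  have p2: "ipath (compl_adj E) ((qs @ [vj]) @ [cl])"
  proof (rule ipath_snoc_sym[OF p1 _ _ compl_adj_irr csym])
    show "qs @ [vj] \<noteq> []" by simp
    show "cl \<notin> set (qs @ [vj])" using nin dif by simp
    show "compl_adj E (last (qs @ [vj])) cl" using clj dif symE[of vj cl] unfolding compl_adj_def by auto
    show "\<not> compl_adj E u cl" if "u \<in> set (butlast (qs @ [vj]))" for u
    proof -
      have "E cl u" using clq that by simp
      then have "E u cl" by (rule sym)
      then show ?thesis unfolding compl_adj_def by simp
    qed
  qed
  have "odd (length ((qs @ [vj]) @ [cl]))"
  proof (rule close_parity_c[OF p2])
    show "3 \<le> length ((qs @ [vj]) @ [cl])" using k by simp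
    show "vi \<notin> set ((qs @ [vj]) @ [cl])" using nin dif by auto
    show "vi \<in> V" by fact
    show "set ((qs @ [vj]) @ [cl]) \<subseteq> V" using S vV by simp
    show "compl_adj E vi (hd ((qs @ [vj]) @ [cl]))"
    proof -
      have "hd qs \<in> set qs" using ne by simp
      then have "vi \<noteq> hd qs" using nin by auto
      then show ?thesis using mi(1) ne unfolding compl_adj_def by simp
    qed
    show "compl_adj E vi (last ((qs @ [vj]) @ [cl]))" using cli dif symE[of vi cl] unfolding compl_adj_def by auto
    fix v assume v: "v \<in> set ((qs @ [vj]) @ [cl])" "v \<noteq> hd ((qs @ [vj]) @ [cl])" "v \<noteq> last ((qs @ [vj]) @ [cl])"
    have vv: "v \<in> set qs \<or> v = vj" using v(1) v(3) by auto
    have vh: "v \<noteq> hd qs" using v(2) ne by simp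
    show "\<not> compl_adj E vi v"
    proof (cases "v = vj")
      case False
      then have "v \<in> set qs" using vv by simp
      then have "v \<in> set (tl qs)" by (rule in_tl[OF dq _ vh])
      then have "E vi v" by (rule mi(2))
      then show ?thesis unfolding compl_adj_def by simp
    next
      case True then show ?thesis using eij unfolding compl_adj_def by simp
    qed
  qed
  then show ?thesis by simp
qed

lemma fC:
  assumes p: "ipath (compl_adj E) qs" and k: "3 \<le> length qs" and S: "set qs \<subseteq> V"
    and vV: "v \<in> V" and nin: "v \<notin> set qs"
    and m: "\<not> E v (hd qs)" "\<not> E v (last qs)" "\<And>q. q \<in> set qs \<Longrightarrow> q \<noteq> hd qs \<Longrightarrow> q \<noteq> last qs \<Longrightarrow> E v q"
  shows "odd (length qs)"
proof (rule close_parity_c[OF p k nin vV S])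
  have ne: "qs \<noteq> []" using k by auto
  show "compl_adj E v (hd qs)" using m nin ne hd_in_set[of qs] unfolding compl_adj_def by auto
  show "compl_adj E v (last qs)" using m nin ne last_in_set[of qs] unfolding compl_adj_def by auto
  show "\<And>va. va \<in> set qs \<Longrightarrow> va \<noteq> hd qs \<Longrightarrow> va \<noteq> last qs \<Longrightarrow> \<not> compl_adj E v va"
    using m unfolding compl_adj_def by blast
qed

lemma fT3:
  assumes p: "ipath (compl_adj E) qs" and k: "2 \<le> length qs" and S: "set qs \<subseteq> V"
    and vV: "v0 \<in> V" "v1 \<in> V" "v2 \<in> V" "v3 \<in> V"
    and nin: "v0 \<notin> set qs" "v1 \<notin> set qs" "v2 \<notin> set qs" "v3 \<notin> set qs"
    and dif: "v0 \<noteq> v1" "v0 \<noteq> v2" "v0 \<noteq> v3" "v1 \<noteq> v2" "v1 \<noteq> v3" "v2 \<noteq> v3"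
    and e: "E v1 v0" "E v1 v2" "E v2 v3" "\<not> E v0 v2" "\<not> E v0 v3" "\<not> E v1 v3"
    and c03: "\<And>q. q \<in> set qs \<Longrightarrow> E v0 q \<and> E v3 q"
    and mi: "\<not> E v1 (hd qs)" "\<And>q. q \<in> set (tl qs) \<Longrightarrow> E v1 q"
    and mj: "\<not> E v2 (last qs)" "\<And>q. q \<in> set (butlast qs) \<Longrightarrow> E v2 q"
  shows "even (length qs)"
proof -
  have ne: "qs \<noteq> []" using k by auto
  have dq: "distinct qs" using p unfolding ipath_def by simp
  have p1: "ipath (compl_adj E) (qs @ [v2])"
  proof (rule ipath_snoc_sym[OF p ne nin(3) compl_adj_irr csym])
    have "last qs \<in> set qs" using ne by simp
    then show "compl_adj E (last qs) v2" using mj(1) nin symE[of v2 "last qs"] unfolding compl_adj_def by auto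
    show "\<not> compl_adj E u v2" if "u \<in> set (butlast qs)" for u
    proof -
      have "E v2 u" by (rule mj(2)[OF that])
      then have "E u v2" by (rule sym)
      then show ?thesis unfolding compl_adj_def by simp
    qed
  qed
  have p2: "ipath (compl_adj E) ((qs @ [v2]) @ [v0])"
  proof (rule ipath_snoc_sym[OF p1 _ _ compl_adj_irr csym])
    show "qs @ [v2] \<noteq> []" by simp
    show "v0 \<notin> set (qs @ [v2])" using nin dif by simp
    show "compl_adj E (last (qs @ [v2])) v0" using e dif symE[of v0 v2] unfolding compl_adj_def by auto
    show "\<not> compl_adj E u v0" if "u \<in> set (butlast (qs @ [v2]))" for u
    proof -
      have "E v0 u" using c03 that by simp
      then have "E u v0" by (rule sym)
      then show ?thesis unfolding compl_adj_def by simp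
    qed
  qed
  have p3: "ipath (compl_adj E) (((qs @ [v2]) @ [v0]) @ [v3])"
  proof (rule ipath_snoc_sym[OF p2 _ _ compl_adj_irr csym])
    show "(qs @ [v2]) @ [v0] \<noteq> []" by simp
    show "v3 \<notin> set ((qs @ [v2]) @ [v0])" using nin dif by simp
    show "compl_adj E (last ((qs @ [v2]) @ [v0])) v3" using e dif unfolding compl_adj_def by auto
    show "\<not> compl_adj E u v3" if "u \<in> set (butlast ((qs @ [v2]) @ [v0]))" for u
    proof -
      have "u \<in> set (qs @ [v2])" using that by (simp only: butlast_snoc)
      then have "u \<in> set qs \<or> u = v2" by auto
      then have "E v3 u" using c03 e(3) symE[of v3 v2] by auto
      then have "E u v3" by (rule sym)
      then show ?thesis unfolding compl_adj_def by simp
    qed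
  qed
  have "odd (length (((qs @ [v2]) @ [v0]) @ [v3]))"
  proof (rule close_parity_c[OF p3])
    show "3 \<le> length (((qs @ [v2]) @ [v0]) @ [v3])" using k by simp
    show "v1 \<notin> set (((qs @ [v2]) @ [v0]) @ [v3])" using nin dif by auto
    show "v1 \<in> V" by fact
    show "set (((qs @ [v2]) @ [v0]) @ [v3]) \<subseteq> V" using S vV by simp
    show "compl_adj E v1 (hd (((qs @ [v2]) @ [v0]) @ [v3]))"
    proof -
      have "hd qs \<in> set qs" using ne by simp
      then have "v1 \<noteq> hd qs" using nin by auto
      then show ?thesis using mi(1) ne unfolding compl_adj_def by simp
    qed
    show "compl_adj E v1 (last (((qs @ [v2]) @ [v0]) @ [v3]))" using e dif unfolding compl_adj_def by auto
    fix v assume v: "v \<in> set (((qs @ [v2]) @ [v0]) @ [v3])" "v \<noteq> hd (((qs @ [v2]) @ [v0]) @ [v3])"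
      "v \<noteq> last (((qs @ [v2]) @ [v0]) @ [v3])"
    have vv: "v \<in> set qs \<or> v = v2 \<or> v = v0" using v(1) v(3) by auto
    have vh: "v \<noteq> hd qs" using v(2) ne by simp
    show "\<not> compl_adj E v1 v"
    proof (cases "v \<in> set qs")
      case True
      then have "v \<in> set (tl qs)" by (rule in_tl[OF dq _ vh])
      then have "E v1 v" by (rule mi(2))
      then show ?thesis unfolding compl_adj_def by simp
    next
      case False
      then have "v = v2 \<or> v = v0" using vv by simp
      then show ?thesis using e unfolding compl_adj_def by auto
    qed
  qed
  then show ?thesis by simp
qed

end

sublocale bg \<subseteq> cg: sgraph "compl_adj E"
  by unfold_locales (auto simp: compl_adj_def dest: sym)


lemma ipath_tl: assumes p: "ipath R qs" shows "ipath R (tl qs)"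
  unfolding ipath_def
proof (intro conjI allI impI)
  show "distinct (tl qs)" using p unfolding ipath_def by (simp add: distinct_tl)
  fix i j assume i: "i < length (tl qs)" and j: "j < length (tl qs)"
  have "R (tl qs ! i) (tl qs ! j) = R (qs ! Suc i) (qs ! Suc j)" using i j by (simp add: nth_tl)
  also have "\<dots> = (Suc j = Suc (Suc i) \<or> Suc i = Suc (Suc j))" using p i j unfolding ipath_def by simp
  finally show "R (tl qs ! i) (tl qs ! j) = (j = Suc i \<or> i = Suc j)" by simp
qed

lemma ipath_butlast: "ipath R qs \<Longrightarrow> ipath R (butlast qs)"
  unfolding ipath_def by (simp add: nth_butlast distinct_butlast)

lemma set_tl_d: "distinct qs \<Longrightarrow> qs \<noteq> [] \<Longrightarrow> set (tl qs) = set qs - {hd qs}"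
  by (cases qs) auto

lemma set_butlast_d: "distinct qs \<Longrightarrow> qs \<noteq> [] \<Longrightarrow> set (butlast qs) = set qs - {last qs}"
proof -
  assume d: "distinct qs" and ne: "qs \<noteq> []"
  have e: "qs = butlast qs @ [last qs]" using ne by simp
  then have "distinct (butlast qs @ [last qs])" using d by simp
  then have "last qs \<notin> set (butlast qs)" by simp
  moreover have "set qs = insert (last qs) (set (butlast qs))" using e by (metis list.simps(15) rotate1.simps(2) set_rotate1)
  ultimately show ?thesis by auto
qed

context bg
begin

lemma AcoreD:
  assumes "Acore Y" "hole_in (V - Y) E cs" "0 < t" "t < r" "r < length cs"
    "complete_to E Y (cs!0)" "complete_to E Y (cs!t)" "complete_to E Y (cs!r)"
    "\<And>i. 0 < i \<Longrightarrow> i < t \<Longrightarrow> \<not> complete_to E Y (cs!i)"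
  shows "t = 1 \<or> even t"
  using assms unfolding Acore_def by blast

lemma BstD:
  assumes "Bst Y" "hole_in (V - Y) E cs" "length cs > 4"
    "complete_to E Y (cs!0)" "complete_to E Y (cs!(length cs - 1))"
    "\<And>i. 0 < i \<Longrightarrow> i < length cs - 1 \<Longrightarrow> \<not> complete_to E Y (cs!i)"
  shows "Outc Y cs"
  using assms unfolding Bst_def by blast

end

locale stp = bg +
  fixes Y :: "'a set" and cs :: "'a list" and t :: nat
  assumes YV: "Y \<subseteq> V" and acY: "anticonnected E Y"
    and IH: "\<And>Y'. Y' \<subset> Y \<Longrightarrow> anticonnected E Y' \<Longrightarrow> Acore Y' \<and> Bst Y'"
    and hole: "hole_in (V - Y) E cs"
    and t3: "3 \<le> t" and todd: "odd t" and tn: "t < length cs"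
    and c0: "complete_to E Y (cs!0)" and ct: "complete_to E Y (cs!t)"
    and cint: "\<And>i. 0 < i \<Longrightarrow> i < t \<Longrightarrow> \<not> complete_to E Y (cs!i)"
    and mode: "(\<exists>r. t < r \<and> r < length cs \<and> complete_to E Y (cs!r)) \<or> t = length cs - 1"
    and n5: "t = length cs - 1 \<Longrightarrow> 4 < length cs"
    and gneg: "\<not> (t = length cs - 1 \<and> Outc Y cs)"
begin

lemma csV: "i < length cs \<Longrightarrow> cs!i \<in> V"
  using hole_set[OF hole] nth_mem by blast

lemma csY: "i < length cs \<Longrightarrow> cs!i \<notin> Y"
  using hole_set[OF hole] nth_mem by blast

lemma Ynotcs: "y \<in> Y \<Longrightarrow> y \<notin> set cs"
  using hole_set[OF hole] by blast

lemma yV: "y \<in> Y \<Longrightarrow> y \<in> V" using YV by blast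

lemma compl: "complete_to E Y v \<Longrightarrow> y \<in> Y \<Longrightarrow> E y v"
  unfolding complete_to_def using sym by blast

lemma complE: "complete_to E Y v \<Longrightarrow> y \<in> Y \<Longrightarrow> E v y"
  unfolding complete_to_def by blast

lemma B5: "t = length cs - 1 \<Longrightarrow> 5 \<le> t"
proof -
  assume tt: "t = length cs - 1"
  have "even (length cs)" using even_hole[OF hole_mono[OF hole]] by blast
  then show "5 \<le> t" using tt n5 todd by presburger
qed

lemma seg_ip: "a \<le> b \<Longrightarrow> b \<le> t \<Longrightarrow> \<not> (a = 0 \<and> b = length cs - 1) \<Longrightarrow> ipath E (seg cs a b)"
  using seg_ipath[OF hole] tn by simp

lemma seg_sub: "b \<le> t \<Longrightarrow> set (seg cs a b) \<subseteq> set cs"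
  using tn by (auto simp: set_seg)

lemma closer:
  assumes l: "1 \<le> l" "l \<le> r" "r < t" and md: "t \<noteq> length cs - 1 \<or> 2 \<le> l \<or> r + 3 \<le> length cs"
  shows "\<exists>cl. cl \<in> V \<and> cl \<notin> Y \<and> complete_to E Y cl \<and> (\<forall>i. l \<le> i \<longrightarrow> i \<le> r \<longrightarrow> \<not> E cl (cs!i) \<and> cl \<noteq> cs!i)"
proof -
  have L: "length cs \<ge> 4" using hole_len[OF hole] .
  have n0: "0 < length cs" using L by linarith
  show ?thesis
  proof (cases "\<exists>r0. t < r0 \<and> r0 < length cs \<and> complete_to E Y (cs!r0)")
    case True
    then obtain r0 where r0: "t < r0" "r0 < length cs" "complete_to E Y (cs!r0)" by blast
    have "\<forall>i. l \<le> i \<longrightarrow> i \<le> r \<longrightarrow> \<not> E (cs!r0) (cs!i) \<and> cs!r0 \<noteq> cs!i"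
    proof (intro allI impI)
      fix i assume i: "l \<le> i" "i \<le> r"
      have il: "i < length cs" using i l tn by simp
      show "\<not> E (cs!r0) (cs!i) \<and> cs!r0 \<noteq> cs!i"
        using hole_adj[OF hole r0(2) il] hole_nth_eq[OF hole r0(2) il] i l r0 by auto
    qed
    then show ?thesis using r0 csV csY by blast
  next
    case False
    then have tt: "t = length cs - 1" using mode by blast
    show ?thesis
    proof (cases "2 \<le> l")
      case True
      have "\<forall>i. l \<le> i \<longrightarrow> i \<le> r \<longrightarrow> \<not> E (cs!0) (cs!i) \<and> cs!0 \<noteq> cs!i"
      proof (intro allI impI)
        fix i assume i: "l \<le> i" "i \<le> r"
        have il: "i < length cs" using i l tn by simp
        show "\<not> E (cs!0) (cs!i) \<and> cs!0 \<noteq> cs!i"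
          using hole_adj[OF hole n0 il] hole_nth_eq[OF hole n0 il] i l True tt L by auto
      qed
      then show ?thesis using c0 csV[OF n0] csY[OF n0] by blast
    next
      case F: False
      then have r3: "r + 3 \<le> length cs" using md tt by simp
      have nl: "length cs - 1 < length cs" using L by simp
      have "\<forall>i. l \<le> i \<longrightarrow> i \<le> r \<longrightarrow> \<not> E (cs!(length cs - 1)) (cs!i) \<and> cs!(length cs - 1) \<noteq> cs!i"
      proof (intro allI impI)
        fix i assume i: "l \<le> i" "i \<le> r"
        have il: "i < length cs" using i l tn by simp
        show "\<not> E (cs!(length cs - 1)) (cs!i) \<and> cs!(length cs - 1) \<noteq> cs!i"
          using hole_adj[OF hole nl il] hole_nth_eq[OF hole nl il] i l r3 L by auto
      qed
      then show ?thesis using ct tt csV[OF nl] csY[OF nl] by auto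
    qed
  qed
qed

lemma f1s:
  assumes x: "x \<in> Y" and ab: "Suc a < b" "b \<le> t" and nw: "\<not> (a = 0 \<and> b = length cs - 1)"
    and ea: "E x (cs!a)" and eb: "E x (cs!b)" and mid: "\<And>i. a < i \<Longrightarrow> i < b \<Longrightarrow> \<not> E x (cs!i)"
  shows "even (b - a)"
proof -
  let ?ps = "seg cs a b"
  have ip: "ipath E ?ps" by (rule seg_ip) (use ab nw in auto)
  have "odd (length ?ps)"
  proof (rule close_parity[OF ip])
    show "3 \<le> length ?ps" using ab by simp
    show "x \<notin> set ?ps" using Ynotcs[OF x] seg_sub[OF ab(2)] by blast
    show "x \<in> V" using yV[OF x] .
    show "set ?ps \<subseteq> V" using seg_sub[OF ab(2)] hole_set[OF hole] by blast
    show "E x (hd ?ps)" using ea ab by (simp add: seg_hd)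
    show "E x (last ?ps)" using eb ab by (simp add: seg_last)
    fix v assume v: "v \<in> set ?ps" "v \<noteq> hd ?ps" "v \<noteq> last ?ps"
    then obtain k where k: "a \<le> k" "k \<le> b" "v = cs!k" by (auto simp: set_seg)
    have "k \<noteq> a" "k \<noteq> b" using v k ab by (auto simp: seg_hd seg_last)
    then show "\<not> E x v" using mid k by simp
  qed
  then show ?thesis using ab by simp
qed

lemma f2s:
  assumes u: "u \<in> Y" and w: "w \<in> Y" and uw: "\<not> E u w" and pq: "p < q" "q \<le> t"
    and nw: "\<not> (p = 0 \<and> q = length cs - 1)"
    and up: "E u (cs!p)" and uo: "\<And>i. p < i \<Longrightarrow> i \<le> q \<Longrightarrow> \<not> E u (cs!i)"
    and wq: "E w (cs!q)" and wo: "\<And>i. p \<le> i \<Longrightarrow> i < q \<Longrightarrow> \<not> E w (cs!i)"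
    and cl: "cl \<in> V" "cl \<notin> Y" "complete_to E Y cl"
    and clo: "\<And>i. p \<le> i \<Longrightarrow> i \<le> q \<Longrightarrow> \<not> E cl (cs!i) \<and> cl \<noteq> cs!i"
  shows "even (q - p)"
proof -
  let ?ps = "seg cs p q"
  have ip: "ipath E ?ps" by (rule seg_ip) (use pq nw in auto)
  have sub: "set ?ps \<subseteq> set cs" by (rule seg_sub[OF pq(2)])
  have uw': "u \<noteq> w" using uo[of q] wq pq by auto
  have "odd (length ?ps)"
  proof (rule f2_parity[OF ip])
    show "?ps \<noteq> []" using pq by (simp add: seg_ne)
    show "set ?ps \<subseteq> V" using sub hole_set[OF hole] by blast
    show "u \<in> V" "w \<in> V" "cl \<in> V" using yV u w cl by auto
    show "u \<notin> set ?ps" "w \<notin> set ?ps" using Ynotcs u w sub by auto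
    show "cl \<notin> set ?ps"
    proof
      assume "cl \<in> set ?ps"
      then obtain k where "p \<le> k" "k \<le> q" "cl = cs!k" by (auto simp: set_seg)
      then show False using clo[of k] by simp
    qed
    show "u \<noteq> w" by fact
    show "u \<noteq> cl" "w \<noteq> cl" using u w cl by auto
    show "E u (hd ?ps)" using up pq by (simp add: seg_hd)
    show "E w (last ?ps)" using wq pq by (simp add: seg_last)
    show "\<not> E u w" by fact
    show "E cl u" "E cl w" using complE[OF cl(3)] u w by auto
    show "\<And>v. v \<in> set ?ps \<Longrightarrow> \<not> E cl v" using clo by (auto simp: set_seg)
    show "\<And>v. v \<in> set ?ps \<Longrightarrow> v \<noteq> hd ?ps \<Longrightarrow> \<not> E u v"
    proof -
      fix v assume v: "v \<in> set ?ps" "v \<noteq> hd ?ps"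
      then obtain k where k: "p \<le> k" "k \<le> q" "v = cs!k" by (auto simp: set_seg)
      have "k \<noteq> p" using v k pq by (auto simp: seg_hd)
      then show "\<not> E u v" using uo k by simp
    qed
    show "\<And>v. v \<in> set (butlast ?ps) \<Longrightarrow> \<not> E w v"
    proof -
      fix v assume "v \<in> set (butlast ?ps)"
      then have "v \<in> (\<lambda>k. cs ! k) ` {p..<q}" using butlast_seg[OF pq(1), of cs] by simp
      then obtain k where k: "p \<le> k" "k < q" "v = cs!k" by auto
      then show "\<not> E w v" using wo by simp
    qed
  qed
  then show ?thesis using pq by simp
qed


lemma ynbr: assumes y: "y \<in> Y" shows "\<exists>i. 0 < i \<and> i < t \<and> E y (cs!i)"
proof (rule ccontr)
  assume no: "\<not> (\<exists>i. 0 < i \<and> i < t \<and> E y (cs!i))"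
  show False
  proof (cases "t = length cs - 1")
    case True
    have "Outc Y cs" unfolding Outc_def
    proof (rule disjI1, rule bexI[OF _ y], intro allI impI)
      fix i assume i: "i < length cs"
      show "E y (cs ! i) = (i = 0 \<or> i = length cs - 1)"
      proof (cases "i = 0 \<or> i = length cs - 1")
        case True then show ?thesis using compl[OF c0 y] compl[OF ct y] \<open>t = length cs - 1\<close> by auto
      next
        case False
        then have "0 < i" "i < t" using i \<open>t = length cs - 1\<close> by auto
        then show ?thesis using no False by auto
      qed
    qed
    then show False using gneg True by simp
  next
    case False
    have "even (t - 0)"
      by (rule f1s[OF y]) (use t3 False compl[OF c0 y] compl[OF ct y] no in auto)
    then show False using todd by simp
  qed
qed

lemma two_el: "\<exists>a b. a \<in> Y \<and> b \<in> Y \<and> a \<noteq> b"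
proof -
  obtain y where y: "y \<in> Y" using acY unfolding anticonnected_def by blast
  obtain i where i: "0 < i" "i < t" "E y (cs!i)" using ynbr[OF y] by blast
  have "\<not> complete_to E Y (cs!i)" using cint i by simp
  then obtain b where b: "b \<in> Y" "\<not> E (cs!i) b" unfolding complete_to_def by blast
  have "b \<noteq> y" using b i sym by blast
  then show ?thesis using b y by blast
qed

lemma nonnbr: assumes x: "x \<in> Y" shows "\<exists>y\<in>Y. y \<noteq> x \<and> \<not> E x y"
proof -
  obtain a b where ab: "a \<in> Y" "b \<in> Y" "a \<noteq> b" using two_el by blast
  obtain z where z: "z \<in> Y" "z \<noteq> x" using ab by blast
  have "(rY (compl_adj E) Y)\<^sup>*\<^sup>* x z" using acY x z unfolding anticonnected_conn conn_def by blast
  then show ?thesis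
  proof (cases rule: converse_rtranclpE)
    case base then show ?thesis using z by simp
  next
    case (step c)
    then have "c \<in> Y" "c \<noteq> x" "\<not> E x c" unfolding rY_def compl_adj_def by auto
    then show ?thesis by blast
  qed
qed

lemma not_compl_minus: "x \<in> Y \<Longrightarrow> \<not> complete_to E (Y - {x}) x"
  using nonnbr unfolding complete_to_def using sym by blast

lemma good_IH:
  assumes sub: "Y' \<subset> Y" and ac: "anticonnected E Y'"
    and ext: "(\<exists>r. t < r \<and> r < length cs \<and> complete_to E Y (cs!r)) \<or> (\<exists>i. 0 < i \<and> i < t \<and> complete_to E Y' (cs!i))"
  shows "good {i. i \<le> t \<and> complete_to E Y' (cs!i)} 0 t"
  unfolding good_def
proof (intro allI impI)
  let ?K = "{i. i \<le> t \<and> complete_to E Y' (cs!i)}"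
  fix c c' assume cK: "c \<in> ?K" and c'K: "c' \<in> ?K" and "0 \<le> c" and cc: "c < c'" and c't: "c' \<le> t"
    and gp: "\<forall>i. c < i \<longrightarrow> i < c' \<longrightarrow> i \<notin> ?K"
  have A: "Acore Y'" using IH[OF sub ac] by simp
  have cmono: "\<And>v. complete_to E Y v \<Longrightarrow> complete_to E Y' v" using sub unfolding complete_to_def by blast
  let ?n = "length cs"
  have hr: "hole_in (V - Y') E (rotate c cs)"
    by (rule hole_rotate[OF hole_mono[OF hole]]) (use sub in auto)
  have L: "length (rotate c cs) = ?n" by simp
  have ncs: "cs \<noteq> []" using tn by auto
  have rot: "\<And>i. i < ?n \<Longrightarrow> rotate c cs ! i = cs ! ((c + i) mod ?n)"
    using ncs by (simp add: nth_rotate)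
  have small: "\<And>i. i \<le> c' - c \<Longrightarrow> rotate c cs ! i = cs ! (c + i)"
  proof -
    fix i assume "i \<le> c' - c"
    then have "c + i < ?n" using cc c't tn by simp
    then show "rotate c cs ! i = cs ! (c + i)" using rot[of i] by simp
  qed
  have r0: "complete_to E Y' (rotate c cs ! 0)" using small[of 0] cK by simp
  have rt: "complete_to E Y' (rotate c cs ! (c' - c))" using small[of "c' - c"] c'K cc by simp
  have rmid: "\<forall>i. 0 < i \<and> i < c' - c \<longrightarrow> \<not> complete_to E Y' (rotate c cs ! i)"
  proof (intro allI impI)
    fix i assume i: "0 < i \<and> i < c' - c"
    have "c < c + i" "c + i < c'" using i by auto
    then have "c + i \<notin> ?K" using gp by blast
    moreover have "c + i \<le> t" using i c't by linarith
    ultimately show "\<not> complete_to E Y' (rotate c cs ! i)" using small[of i] i by simp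
  qed
  obtain r' where r': "c' - c < r'" "r' < ?n" "complete_to E Y' (rotate c cs ! r')"
  proof -
    show ?thesis
    proof (cases "\<exists>r. t < r \<and> r < ?n \<and> complete_to E Y (cs!r)")
      case True
      then obtain r where r: "t < r" "r < ?n" "complete_to E Y (cs!r)" by blast
      have "rotate c cs ! (r - c) = cs ! r" using rot[of "r - c"] r cc c't by simp
      then show ?thesis using that[of "r - c"] r cc c't cmono by simp
    next
      case False
      then obtain i0 where i0: "0 < i0" "i0 < t" "complete_to E Y' (cs!i0)" using ext by blast
      have nfull: "\<not> (c = 0 \<and> c' = t)" using gp i0 by auto
      show ?thesis
      proof (cases "c = 0")
        case True
        then have "c' < t" using nfull c't by simp
        have "rotate c cs ! t = cs ! t" using rot[of t] True tn by simp
        then show ?thesis using that[of t] True \<open>c' < t\<close> tn cmono[OF ct] by simp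
      next
        case F: False
        have "rotate c cs ! (?n - c) = cs ! 0" using rot[of "?n - c"] F cc c't tn by simp
        then show ?thesis using that[of "?n - c"] F cc c't tn cmono[OF c0] by simp
      qed
    qed
  qed
  have "c' - c = 1 \<or> even (c' - c)"
    using A hr cc r' r0 rt rmid unfolding Acore_def by (metis L zero_less_diff)
  then show "c' = Suc c \<or> even (c' - c)" using cc by auto
qed

definition LL :: "'a \<Rightarrow> bool" where "LL x \<longleftrightarrow> complete_to E (Y - {x}) (cs!1)"
definition RR :: "'a \<Rightarrow> bool" where "RR x \<longleftrightarrow> complete_to E (Y - {x}) (cs!(t-1))"

lemma LL_unique: "u \<in> Y \<Longrightarrow> u' \<in> Y \<Longrightarrow> LL u \<Longrightarrow> LL u' \<Longrightarrow> u = u'"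
proof -
  assume a: "u \<in> Y" "u' \<in> Y" "LL u" "LL u'"
  have "\<not> complete_to E Y (cs!1)" using cint t3 by simp
  then obtain y where y: "y \<in> Y" "\<not> E (cs!1) y" unfolding complete_to_def by blast
  have "y = u" using a(3) y unfolding LL_def complete_to_def by blast
  moreover have "y = u'" using a(4) y unfolding LL_def complete_to_def by blast
  ultimately show ?thesis by simp
qed

lemma RR_unique: "u \<in> Y \<Longrightarrow> u' \<in> Y \<Longrightarrow> RR u \<Longrightarrow> RR u' \<Longrightarrow> u = u'"
proof -
  assume a: "u \<in> Y" "u' \<in> Y" "RR u" "RR u'"
  have "\<not> complete_to E Y (cs!(t-1))" using cint t3 by simp
  then obtain y where y: "y \<in> Y" "\<not> E (cs!(t-1)) y" unfolding complete_to_def by blast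
  have "y = u" using a(3) y unfolding RR_def complete_to_def by blast
  moreover have "y = u'" using a(4) y unfolding RR_def complete_to_def by blast
  ultimately show ?thesis by simp
qed


lemma noZ:
  assumes x: "x \<in> Y" and acx: "anticonnected E (Y - {x})"
    and nz: "\<And>i. 0 < i \<Longrightarrow> i < t \<Longrightarrow> \<not> complete_to E (Y - {x}) (cs!i)"
  shows False
proof -
  have sub: "Y - {x} \<subset> Y" using x by auto
  have cmono: "\<And>v. complete_to E Y v \<Longrightarrow> complete_to E (Y - {x}) v" unfolding complete_to_def by blast
  have h': "hole_in (V - (Y - {x})) E cs" by (rule hole_mono[OF hole]) auto
  have AB: "Acore (Y - {x}) \<and> Bst (Y - {x})" by (rule IH[OF sub acx])
  show False
  proof (cases "\<exists>r. t < r \<and> r < length cs \<and> complete_to E Y (cs!r)")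
    case True
    then obtain r where r: "t < r" "r < length cs" "complete_to E Y (cs!r)" by blast
    have "t = 1 \<or> even t"
      by (rule AcoreD[of "Y - {x}" cs t r]) (use AB h' t3 r cmono[OF c0] cmono[OF ct] cmono[OF r(3)] nz in auto)
    then show False using todd t3 by auto
  next
    case False
    then have tt: "t = length cs - 1" using mode by blast
    have "Outc (Y - {x}) cs"
      by (rule BstD) (use AB h' n5[OF tt] cmono[OF c0] cmono[OF ct] nz tt in auto)
    then have "Outc Y cs" by (rule Outc_mono) auto
    then show False using gneg tt by simp
  qed
qed

lemma notadj_gen:
  assumes d: "distinct L" and P: "\<forall>i<length L. R w (L!i) \<longleftrightarrow> P i" and v: "v \<in> set L"
    and o: "\<And>i. i < length L \<Longrightarrow> P i \<Longrightarrow> L!i \<noteq> v"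
  shows "\<not> R w v"
proof -
  obtain j where j: "j < length L" "L!j = v" using v by (metis in_set_conv_nth)
  then have "\<not> P j" using o by blast
  then show ?thesis using P j by auto
qed

context
  fixes x a b
  assumes x: "x \<in> Y" and acx: "anticonnected E (Y - {x})"
    and ab: "Suc a < b" "b \<le> t" and nw: "\<not> (a = 0 \<and> b = length cs - 1)"
    and ea: "E x (cs!a)" and eb: "E x (cs!b)" and mid: "\<And>i. a < i \<Longrightarrow> i < b \<Longrightarrow> \<not> E x (cs!i)"
begin

lemma Dhole: "hole_in (V - (Y - {x})) E (x # seg cs a b)"
proof (rule hole_close[OF seg_ip])
  show "a \<le> b" "b \<le> t" "\<not> (a = 0 \<and> b = length cs - 1)" using ab nw by auto
  show "3 \<le> length (seg cs a b)" using ab by simp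
  have sub: "set (seg cs a b) \<subseteq> set cs" by (rule seg_sub[OF ab(2)])
  show "x \<notin> set (seg cs a b)" using Ynotcs[OF x] sub by blast
  show "\<not> E x x" by (rule irr)
  show "E x (hd (seg cs a b))" "E (hd (seg cs a b)) x" using ea ab sym by (auto simp: seg_hd)
  show "E x (last (seg cs a b))" "E (last (seg cs a b)) x" using eb ab sym by (auto simp: seg_last)
  show "\<not> E x v \<and> \<not> E v x" if "v \<in> set (seg cs a b)" "v \<noteq> hd (seg cs a b)" "v \<noteq> last (seg cs a b)" for v
  proof -
    have "v \<in> (\<lambda>k. cs ! k) ` {a..b}" using that(1) unfolding set_seg .
    then obtain k where k: "a \<le> k" "k \<le> b" "v = cs!k" by auto
    have "k \<noteq> a" "k \<noteq> b" using that k ab by (auto simp: seg_hd seg_last)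
    then have "\<not> E x v" using mid k by simp
    then show ?thesis using sym by blast
  qed
  show "set (x # seg cs a b) \<subseteq> V - (Y - {x})" using sub hole_set[OF hole] yV[OF x] by auto
qed

lemma Dnth0: "(x # seg cs a b) ! 0 = x" by simp
lemma DnthS: "j \<le> b - a \<Longrightarrow> (x # seg cs a b) ! Suc j = cs ! (a + j)"
  using ab by (simp add: seg_nth)
lemma Dlen: "length (x # seg cs a b) = b - a + 2" using ab by simp

lemma mod_help: "k < (n::nat) \<Longrightarrow> (n + k) mod n = k" by simp

lemma Dargs0:
  fixes u v z w :: nat
  assumes kk: "kmin = a + v" "kmid = a + z" "kmax = a + u" "b = a + u + w" and ord: "v < z" "z < u"
    and kmin: "complete_to E (Y - {x}) (cs!kmin)"
    and kmid: "complete_to E (Y - {x}) (cs!kmid)"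
    and kmax: "complete_to E (Y - {x}) (cs!kmax)"
    and ext: "\<And>k. a \<le> k \<Longrightarrow> k \<le> b \<Longrightarrow> complete_to E (Y - {x}) (cs!k) \<Longrightarrow> kmin \<le> k \<and> k \<le> kmax"
  shows "even (kmax - kmin)"
proof -
  let ?D = "x # seg cs a b"
  define nD where "nD = u + w + 2"
  define m where "m = u + 1"
  define t' where "t' = w + v + 2"
  define r' where "r' = w + z + 2"
  let ?Dr = "rotate m ?D"
  have sub: "Y - {x} \<subset> Y" using x by auto
  have A: "Acore (Y - {x})" using IH[OF sub acx] by simp
  have hr: "hole_in (V - (Y - {x})) E ?Dr" by (rule hole_rotate[OF Dhole])
  have lD: "length ?D = nD" using Dlen kk unfolding nD_def by simp
  have lr: "length ?Dr = nD" using lD by simp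
  have rot: "\<And>i. i < nD \<Longrightarrow> ?Dr ! i = ?D ! ((m + i) mod nD)"
    using lD by (simp add: nth_rotate)
  have Dn: "\<And>j. j \<le> u + w \<Longrightarrow> ?D ! Suc j = cs ! (a + j)"
    using DnthS kk by simp
  have e0: "?Dr ! 0 = cs ! kmax"
  proof -
    have "m < nD" unfolding m_def nD_def by simp
    then have "?Dr ! 0 = ?D ! Suc u" using rot[of 0] unfolding m_def nD_def by simp
    then show ?thesis using Dn[of u] kk by simp
  qed
  have et: "?Dr ! t' = cs ! kmin"
  proof -
    have tl: "t' < nD" unfolding t'_def nD_def using ord by simp
    have eq: "m + t' = nD + Suc v" unfolding m_def t'_def nD_def by simp
    have "(m + t') mod nD = Suc v" unfolding eq by (rule mod_help) (use ord in \<open>simp add: nD_def\<close>)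
    then have "?Dr ! t' = ?D ! Suc v" using rot[OF tl] by simp
    then show ?thesis using Dn[of v] kk ord by simp
  qed
  have er: "?Dr ! r' = cs ! kmid"
  proof -
    have rl: "r' < nD" unfolding r'_def nD_def using ord by simp
    have eq: "m + r' = nD + Suc z" unfolding m_def r'_def nD_def by simp
    have "(m + r') mod nD = Suc z" unfolding eq by (rule mod_help) (use ord in \<open>simp add: nD_def\<close>)
    then have "?Dr ! r' = ?D ! Suc z" using rot[OF rl] by simp
    then show ?thesis using Dn[of z] kk ord by simp
  qed
  have emid: "\<not> complete_to E (Y - {x}) (?Dr ! i)" if i: "0 < i" "i < t'" for i
  proof -
    have il: "i < nD" using i ord unfolding t'_def nD_def by simp
    consider "i \<le> w" | "i = Suc w" | j where "i = Suc w + j" "0 < j"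
    proof -
      assume c1: "i \<le> w \<Longrightarrow> thesis" and c2: "i = Suc w \<Longrightarrow> thesis"
        and c3: "\<And>j. i = Suc w + j \<Longrightarrow> 0 < j \<Longrightarrow> thesis"
      show thesis
      proof (cases "i \<le> w")
        case True then show ?thesis by (rule c1)
      next
        case False
        show ?thesis
        proof (cases "i = Suc w")
          case True then show ?thesis by (rule c2)
        next
          case F2: False
          have "i = Suc w + (i - Suc w)" "0 < i - Suc w" using False F2 by auto
          then show ?thesis by (rule c3)
        qed
      qed
    qed
    then show ?thesis
    proof cases
      case 1
      have "(m + i) mod nD = Suc (u + i)" unfolding m_def nD_def using 1 by simp
      then have "?Dr ! i = ?D ! Suc (u + i)" using rot[OF il] by simp
      then have eq: "?Dr ! i = cs ! (kmax + i)" using Dn[of "u + i"] 1 kk by (simp add: add.assoc)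
      have "kmax + i \<le> b" using 1 kk by simp
      then show ?thesis using ext[of "kmax + i"] eq i kk by auto
    next
      case 2
      have "(m + i) mod nD = 0" unfolding m_def nD_def using 2 by simp
      then have "?Dr ! i = x" using rot[OF il] by simp
      then show ?thesis using not_compl_minus[OF x] by simp
    next
      case 3
      have jv: "j \<le> v" using 3 i unfolding t'_def by simp
      have "m + i = nD + j" unfolding m_def nD_def using 3 by simp
      then have "(m + i) mod nD = j" using mod_help[of j nD] jv ord unfolding nD_def by simp
      then have "?Dr ! i = ?D ! j" using rot[OF il] by simp
      moreover obtain j' where j': "j = Suc j'" using 3 by (cases j) auto
      ultimately have eq: "?Dr ! i = cs ! (a + j')" using Dn[of j'] jv ord by simp
      have "a + j' < kmin" using j' jv kk by simp
      then show ?thesis using ext[of "a + j'"] eq kk ord by auto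
    qed
  qed
  have t'pos: "0 < t'" "t' < r'" "r' < length ?Dr" unfolding t'_def r'_def using ord lr unfolding nD_def by auto
  have "t' = 1 \<or> even t'"
    by (rule AcoreD[OF A hr t'pos]) (use e0 et er kmax kmin kmid emid in auto)
  moreover have "t' \<noteq> 1" unfolding t'_def by simp
  ultimately have "even t'" by simp
  moreover have "even (b - a)" by (rule f1s[OF x ab nw ea eb mid])
  ultimately show ?thesis unfolding t'_def using kk by presburger
qed

lemma Bargs0:
  fixes p q :: nat
  assumes cc: "c = a + 1 + p" "b = c + 2 + q"
    and kc: "complete_to E (Y - {x}) (cs!c)" "complete_to E (Y - {x}) (cs!(c+1))"
    and only: "\<And>k. a \<le> k \<Longrightarrow> k \<le> b \<Longrightarrow> complete_to E (Y - {x}) (cs!k) \<Longrightarrow> k = c \<or> k = c + 1"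
  shows False
proof -
  let ?D = "x # seg cs a b"
  define nD where "nD = p + q + 5"
  let ?D' = "rotate (q + 2) (rev ?D)"
  have sub: "Y - {x} \<subset> Y" using x by auto
  have B: "Bst (Y - {x})" using IH[OF sub acx] by simp
  have lD: "length ?D = nD" using Dlen cc unfolding nD_def by simp
  have lD': "length ?D' = nD" using lD by simp
  have hD': "hole_in (V - (Y - {x})) E ?D'" by (rule hole_rotate[OF hole_rev[OF Dhole]])
  have dD': "distinct ?D'" using hole_distinct[OF hD'] .
  have sD': "set ?D' = insert x (set (seg cs a b))" by simp
  have Dn: "\<And>j. j \<le> b - a \<Longrightarrow> ?D ! Suc j = cs ! (a + j)" using DnthS by simp
  have revn: "rev ?D ! j = ?D ! (nD - Suc j)" if "j < nD" for j
  proof -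
    have "j < length ?D" using that lD by simp
    then have "rev ?D ! j = ?D ! (length ?D - Suc j)" by (rule rev_nth)
    then show ?thesis unfolding lD .
  qed
  have lrD: "length (rev ?D) = nD" using lD by simp
  have rot: "?D' ! i = rev ?D ! ((q + 2 + i) mod nD)" if "i < nD" for i
  proof -
    have "i < length (rev ?D)" using that lrD by simp
    then have "?D' ! i = rev ?D ! ((q + 2 + i) mod length (rev ?D))" by (rule nth_rotate)
    then show ?thesis unfolding lrD .
  qed
  have p0: "?D' ! 0 = cs ! c"
  proof -
    have e: "(q + 2 + 0) mod nD = q + 2" unfolding nD_def by simp
    have "?D' ! 0 = rev ?D ! ((q + 2 + 0) mod nD)" by (rule rot) (simp add: nD_def)
    then have "?D' ! 0 = rev ?D ! (q + 2)" unfolding e .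
    also have "\<dots> = ?D ! Suc (p + 1)" using revn[of "q + 2"] unfolding nD_def by simp
    also have "\<dots> = cs ! (a + (p + 1))" using Dn[of "p + 1"] cc by simp
    finally show ?thesis using cc by simp
  qed
  have p1: "?D' ! 1 = cs ! (a + p)"
  proof -
    have e: "(q + 2 + 1) mod nD = q + 3" unfolding nD_def by simp
    have "?D' ! 1 = rev ?D ! ((q + 2 + 1) mod nD)" by (rule rot) (simp add: nD_def)
    then have "?D' ! 1 = rev ?D ! (q + 3)" unfolding e .
    also have "\<dots> = ?D ! Suc p" using revn[of "q + 3"] unfolding nD_def by simp
    also have "\<dots> = cs ! (a + p)" using Dn[of p] cc by simp
    finally show ?thesis .
  qed
  have pl: "?D' ! (nD - 1) = cs ! (c + 1)"
  proof -
    have e: "q + 2 + (nD - 1) = nD + (q + 1)" unfolding nD_def by simp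
    have "(q + 2 + (nD - 1)) mod nD = q + 1" unfolding e by (rule mod_help) (simp add: nD_def)
    moreover have "?D' ! (nD - 1) = rev ?D ! ((q + 2 + (nD - 1)) mod nD)" by (rule rot) (simp add: nD_def)
    ultimately have "?D' ! (nD - 1) = rev ?D ! (q + 1)" by simp
    also have "\<dots> = ?D ! Suc (p + 2)" using revn[of "q + 1"] unfolding nD_def by simp
    also have "\<dots> = cs ! (a + (p + 2))" using Dn[of "p + 2"] cc by simp
    finally show ?thesis using cc by simp
  qed
  have pl2: "?D' ! (nD - 2) = cs ! (c + 2)"
  proof -
    have e: "q + 2 + (nD - 2) = nD + q" unfolding nD_def by simp
    have "(q + 2 + (nD - 2)) mod nD = q" unfolding e by (rule mod_help) (simp add: nD_def)
    moreover have "?D' ! (nD - 2) = rev ?D ! ((q + 2 + (nD - 2)) mod nD)" by (rule rot) (simp add: nD_def)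
    ultimately have "?D' ! (nD - 2) = rev ?D ! q" by simp
    also have "\<dots> = ?D ! Suc (p + 3)" using revn[of q] unfolding nD_def by simp
    also have "\<dots> = cs ! (a + (p + 3))" using Dn[of "p + 3"] cc by simp
    also have "a + (p + 3) = c + 2" using cc by arith
    finally show ?thesis .
  qed
  have a1: "1 \<le> a"
  proof (rule ccontr)
    assume "\<not> 1 \<le> a"
    then have "a = 0" by simp
    moreover have "complete_to E (Y - {x}) (cs!0)" using c0 unfolding complete_to_def by blast
    ultimately have "0 = c \<or> 0 = c + 1" using only[of 0] by simp
    then show False using cc by simp
  qed
  have bt: "b < t"
  proof (rule ccontr)
    assume "\<not> b < t"
    then have "b = t" using ab by simp
    moreover have "complete_to E (Y - {x}) (cs!t)" using ct unfolding complete_to_def by blast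
    ultimately have "b = c \<or> b = c + 1" using only[of b] ab by simp
    then show False using cc by simp
  qed
  have tl: "t < length cs" by (rule tn)
  obtain cl1 where cl1: "cl1 \<in> V" "cl1 \<notin> Y" "complete_to E Y cl1"
    "\<And>i. a \<le> i \<Longrightarrow> i \<le> c \<Longrightarrow> \<not> E cl1 (cs!i) \<and> cl1 \<noteq> cs!i"
    using closer[of a c] a1 cc ab bt tl by auto
  obtain cl2 where cl2: "cl2 \<in> V" "cl2 \<notin> Y" "complete_to E Y cl2"
    "\<And>i. c + 1 \<le> i \<Longrightarrow> i \<le> b \<Longrightarrow> \<not> E cl2 (cs!i) \<and> cl2 \<noteq> cs!i"
    using closer[of "c + 1" b] a1 cc ab bt tl by auto
  have nC: "\<not> complete_to E (Y - {x}) (?D' ! i)" if i: "0 < i" "i < nD - 1" for i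
  proof
    assume C: "complete_to E (Y - {x}) (?D' ! i)"
    have il: "i < nD" using i by simp
    have ne0: "?D' ! i \<noteq> ?D' ! 0" using nth_eq_iff_index_eq[OF dD', of i 0] i lD' by simp
    have nel: "?D' ! i \<noteq> ?D' ! (nD - 1)" using nth_eq_iff_index_eq[OF dD', of i "nD - 1"] i lD' by simp
    have "?D' ! i \<in> set ?D'" using il lD' by (metis nth_mem)
    then have "?D' ! i \<in> insert x (set (seg cs a b))" by (simp only: sD')
    then have "?D' ! i = x \<or> ?D' ! i \<in> set (seg cs a b)" by blast
    then show False
    proof
      assume "?D' ! i = x" then show False using C not_compl_minus[OF x] by simp
    next
      assume "?D' ! i \<in> set (seg cs a b)"
      then obtain k where k: "a \<le> k" "k \<le> b" "?D' ! i = cs ! k" by (auto simp: set_seg)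
      then have "k = c \<or> k = c + 1" using only C by simp
      then show False using k ne0 nel p0 pl by auto
    qed
  qed
  have O: "Outc (Y - {x}) ?D'"
  proof (rule BstD[OF B hD'])
    show "4 < length ?D'" using lD' unfolding nD_def by simp
    show "complete_to E (Y - {x}) (?D' ! 0)" using p0 kc by simp
    show "complete_to E (Y - {x}) (?D' ! (length ?D' - 1))" using pl kc lD' by simp
    show "\<And>i. 0 < i \<Longrightarrow> i < length ?D' - 1 \<Longrightarrow> \<not> complete_to E (Y - {x}) (?D' ! i)" using nC lD' by simp
  qed
  have xD: "x \<in> set ?D'" by simp
  have segD: "\<And>k. a \<le> k \<Longrightarrow> k \<le> b \<Longrightarrow> cs ! k \<in> set ?D'" by (simp add: seg_in_set)
  have csne: "\<And>k k'. k < length cs \<Longrightarrow> k' < length cs \<Longrightarrow> k \<noteq> k' \<Longrightarrow> cs ! k \<noteq> cs ! k'"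
    using hole_nth_eq[OF hole] by blast
  have xne: "\<And>k. k < length cs \<Longrightarrow> x \<noteq> cs ! k" using Ynotcs[OF x] nth_mem by blast
  have ebav: "even (b - a)" by (rule f1s[OF x ab nw ea eb mid])
  have bl: "b < length cs" using ab tn by simp
  from O show False unfolding Outc_def
  proof (elim disjE bexE conjE)
    fix w assume w: "w \<in> Y - {x}" and P: "\<forall>i<length ?D'. E w (?D' ! i) \<longleftrightarrow> (i = 0 \<or> i = length ?D' - 1)"
    have wY: "w \<in> Y" using w by simp
    have l0: "0 < length ?D'" "length ?D' - 1 < length ?D'" using lD' unfolding nD_def by auto
    have "E w (?D' ! 0)" using P l0 by blast
    then have wc1: "E w (cs ! c)" unfolding p0 .
    have "E w (?D' ! (length ?D' - 1))" using P l0 by blast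
    then have wc2: "E w (cs ! (c+1))" unfolding lD' pl .
    note wc = wc1 wc2
    have wn: "\<not> E w v" if "v \<in> set ?D'" "v \<noteq> cs ! c" "v \<noteq> cs ! (c+1)" for v
      by (rule notadj_gen[where R=E and P="\<lambda>i. i = 0 \<or> i = length ?D' - 1", OF dD' P that(1)]) (use that p0 pl lD' in auto)
    have wx: "\<not> E x w" using wn[OF xD] xne cc bl sym by auto
    have "even (c - a)"
    proof (rule f2s[OF x wY wx _ _ _ ea _ wc(1) _ cl1(1-3)])
      show "a < c" "c \<le> t" "\<not> (a = 0 \<and> c = length cs - 1)" using cc ab a1 by auto
      show "\<And>i. a < i \<Longrightarrow> i \<le> c \<Longrightarrow> \<not> E x (cs ! i)" using mid cc by auto
      show "\<And>i. a \<le> i \<Longrightarrow> i < c \<Longrightarrow> \<not> E w (cs ! i)"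
        using wn segD csne cc bl by auto
      show "\<And>i. a \<le> i \<Longrightarrow> i \<le> c \<Longrightarrow> \<not> E cl1 (cs ! i) \<and> cl1 \<noteq> cs ! i" using cl1(4) by simp
    qed
    moreover have "even (b - (c + 1))"
    proof (rule f2s[OF wY x _ _ _ _ wc(2) _ eb _ cl2(1-3)])
      show "\<not> E w x" using wx sym by blast
      show "c + 1 < b" "b \<le> t" "\<not> (c + 1 = 0 \<and> b = length cs - 1)" using cc ab by auto
      show "\<And>i. c + 1 < i \<Longrightarrow> i \<le> b \<Longrightarrow> \<not> E w (cs ! i)"
        using wn segD csne cc bl by auto
      show "\<And>i. c + 1 \<le> i \<Longrightarrow> i < b \<Longrightarrow> \<not> E x (cs ! i)" using mid cc by auto
      show "\<And>i. c + 1 \<le> i \<Longrightarrow> i \<le> b \<Longrightarrow> \<not> E cl2 (cs ! i) \<and> cl2 \<noteq> cs ! i" using cl2(4) by simp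
    qed
    ultimately show False using ebav cc by presburger
  next
    fix al be assume al: "al \<in> Y - {x}" and be: "be \<in> Y - {x}" and nab: "\<not> E al be"
      and Pa: "\<forall>i<length ?D'. E al (?D' ! i) \<longleftrightarrow> (i = 0 \<or> i = 1 \<or> i = length ?D' - 1)"
      and Pb: "\<forall>i<length ?D'. E be (?D' ! i) \<longleftrightarrow> (i = 0 \<or> i = length ?D' - 2 \<or> i = length ?D' - 1)"
    have alY: "al \<in> Y" and beY: "be \<in> Y" using al be by auto
    have l1: "1 < length ?D'" "length ?D' - 2 < length ?D'" using lD' unfolding nD_def by auto
    have "E al (?D' ! 1)" using Pa l1 by blast
    then have ea1: "E al (cs ! (a + p))" unfolding p1 .
    have "E be (?D' ! (length ?D' - 2))" using Pb l1 by blast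
    then have eb2: "E be (cs ! (c + 2))" unfolding lD' pl2 .
    have an: "\<not> E al v" if "v \<in> set ?D'" "v \<noteq> cs ! c" "v \<noteq> cs ! (a + p)" "v \<noteq> cs ! (c+1)" for v
      by (rule notadj_gen[where R=E and P="\<lambda>i. i = 0 \<or> i = 1 \<or> i = length ?D' - 1", OF dD' Pa that(1)]) (use that p0 p1 pl lD' in auto)
    have bn: "\<not> E be v" if "v \<in> set ?D'" "v \<noteq> cs ! c" "v \<noteq> cs ! (c+2)" "v \<noteq> cs ! (c+1)" for v
      by (rule notadj_gen[where R=E and P="\<lambda>i. i = 0 \<or> i = length ?D' - 2 \<or> i = length ?D' - 1", OF dD' Pb that(1)]) (use that p0 pl2 pl lD' cc in \<open>auto simp: nD_def\<close>)
    have ax: "\<not> E x al" using an[OF xD] xne cc bl sym by auto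
    have bx: "\<not> E be x" using bn[OF xD] xne cc bl by auto
    have ep: "even p"
    proof (cases "p = 0")
      case True then show ?thesis by simp
    next
      case False
      have "even (a + p - a)"
      proof (rule f2s[OF x alY ax _ _ _ ea _ ea1 _ cl1(1-3)])
        show "a < a + p" "a + p \<le> t" "\<not> (a = 0 \<and> a + p = length cs - 1)" using False cc ab a1 by auto
        show "\<And>i. a < i \<Longrightarrow> i \<le> a + p \<Longrightarrow> \<not> E x (cs ! i)" using mid cc by auto
        show "\<And>i. a \<le> i \<Longrightarrow> i < a + p \<Longrightarrow> \<not> E al (cs ! i)"
          using an segD csne cc bl by auto
        show "\<And>i. a \<le> i \<Longrightarrow> i \<le> a + p \<Longrightarrow> \<not> E cl1 (cs ! i) \<and> cl1 \<noteq> cs ! i" using cl1(4) cc by simp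
      qed
      then show ?thesis by simp
    qed
    have eq: "even q"
    proof (cases "q = 0")
      case True then show ?thesis by simp
    next
      case False
      have "even (b - (c + 2))"
      proof (rule f2s[OF beY x bx _ _ _ eb2 _ eb _ cl2(1-3)])
        show "c + 2 < b" "b \<le> t" "\<not> (c + 2 = 0 \<and> b = length cs - 1)" using False cc ab by auto
        show "\<And>i. c + 2 < i \<Longrightarrow> i \<le> b \<Longrightarrow> \<not> E be (cs ! i)"
          using bn segD csne cc bl by auto
        show "\<And>i. c + 2 \<le> i \<Longrightarrow> i < b \<Longrightarrow> \<not> E x (cs ! i)" using mid cc by auto
        show "\<And>i. c + 2 \<le> i \<Longrightarrow> i \<le> b \<Longrightarrow> \<not> E cl2 (cs ! i) \<and> cl2 \<noteq> cs ! i" using cl2(4) by simp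
      qed
      then show ?thesis using cc by simp
    qed
    show False using ep eq ebav cc by presburger
  qed
qed

end

lemma Kint:
  assumes x: "x \<in> Y" and acx: "anticonnected E (Y - {x})"
  shows "\<exists>i. 0 < i \<and> i < t \<and> complete_to E (Y - {x}) (cs!i)"
  using noZ[OF x acx] by blast

lemma KA:
  assumes x: "x \<in> Y" and k: "k \<le> t" "complete_to E (Y - {x}) (cs!k)" and e: "E x (cs!k)"
  shows "k = 0 \<or> k = t"
proof (rule ccontr)
  assume "\<not> (k = 0 \<or> k = t)"
  then have "0 < k" "k < t" using k by auto
  moreover have "complete_to E Y (cs!k)" using k(2) e sym unfolding complete_to_def by blast
  ultimately show False using cint by blast
qed

lemma pergap:
  assumes x: "x \<in> Y" and acx: "anticonnected E (Y - {x})" and nL: "\<not> LL x" and nR: "\<not> RR x"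
    and ab: "a < b" "b \<le> t" and ea: "E x (cs!a)" and eb: "E x (cs!b)"
    and mid: "\<And>i. a < i \<Longrightarrow> i < b \<Longrightarrow> \<not> E x (cs!i)"
  shows "even (units {i. i \<le> t \<and> complete_to E (Y - {x}) (cs!i)} a b)"
proof -
  define K where "K = {i. i \<le> t \<and> complete_to E (Y - {x}) (cs!i)}"
  have sub: "Y - {x} \<subset> Y" using x by auto
  have gK: "good K 0 t" unfolding K_def by (rule good_IH[OF sub acx]) (use Kint[OF x acx] in blast)
  have KA': "\<And>k. k \<in> K \<Longrightarrow> E x (cs!k) \<Longrightarrow> k = 0 \<or> k = t" using KA[OF x] unfolding K_def by blast
  have nw: "\<not> (a = 0 \<and> b = length cs - 1)"
  proof
    assume a0: "a = 0 \<and> b = length cs - 1"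
    then have "b = t" using ab tn by simp
    obtain i where "0 < i" "i < t" "E x (cs!i)" using ynbr[OF x] by blast
    then show False using mid a0 \<open>b = t\<close> by auto
  qed
  show ?thesis
  proof (cases "b = Suc a")
    case True
    have "{i. a \<le> i \<and> i < b \<and> i \<in> K \<and> Suc i \<in> K} = {}"
    proof (rule ccontr)
      assume "{i. a \<le> i \<and> i < b \<and> i \<in> K \<and> Suc i \<in> K} \<noteq> {}"
      then obtain i where i: "a \<le> i" "i < b" "i \<in> K" "Suc i \<in> K" by blast
      then have "i = a" using True by simp
      then have "a \<in> K" "Suc a \<in> K" using i by auto
      then have "a = 0 \<or> a = t" "Suc a = 0 \<or> Suc a = t" using KA' ea eb True by auto
      then show False using ab True t3 by auto
    qed
    then have "units K a b = 0" unfolding units_def by (simp only: card.empty)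
    then show ?thesis unfolding K_def by simp
  next
    case False
    then have ab2: "Suc a < b" using ab by simp
    have "even (units K a b)"
    proof (rule ccontr)
      assume odd: "\<not> even (units K a b)" 
      then have "units K a b \<noteq> 0" by (metis dvd_0_right)
      then obtain i0 where i0: "a \<le> i0" "i0 < b" "i0 \<in> K" "Suc i0 \<in> K"
        unfolding units_def by (metis (mono_tags, lifting) card.empty empty_Collect_eq)
      define M where "M = K \<inter> {a..b}"
      have finM: "finite M" unfolding M_def by simp
      have neM: "M \<noteq> {}" using i0 unfolding M_def by auto
      define kmin where "kmin = Min M"
      define kmax where "kmax = Max M"
      have kmin: "kmin \<in> K" "a \<le> kmin" "kmin \<le> b" using Min_in[OF finM neM] unfolding kmin_def M_def by auto
      have kmax: "kmax \<in> K" "a \<le> kmax" "kmax \<le> b" using Max_in[OF finM neM] unfolding kmax_def M_def by auto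
      have kminle: "\<And>k. k \<in> K \<Longrightarrow> a \<le> k \<Longrightarrow> k \<le> b \<Longrightarrow> kmin \<le> k"
        using Min_le[OF finM] unfolding kmin_def M_def by auto
      have kmaxge: "\<And>k. k \<in> K \<Longrightarrow> a \<le> k \<Longrightarrow> k \<le> b \<Longrightarrow> k \<le> kmax"
        using Max_ge[OF finM] unfolding kmax_def M_def by auto
      have kk: "kmin < kmax" using kminle[of i0] kmaxge[of "Suc i0"] i0 by auto
      have ur: "units K a b = units K kmin kmax"
        by (rule units_restrict) (use kmin kmax kk kminle kmaxge in auto)
      have p1: "even (kmax - kmin) \<longleftrightarrow> even (units K kmin kmax)"
        by (rule P1[OF gK kmin(1)]) (use kmin kmax kk ab in auto)
      show False
      proof (cases "\<exists>kmid. kmid \<in> K \<and> kmin < kmid \<and> kmid < kmax")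
        case True
        then obtain kmid where kmid: "kmid \<in> K" "kmin < kmid" "kmid < kmax" by blast
        have "even (kmax - kmin)"
        proof (rule Dargs0[OF x acx ab2 ab(2) nw ea eb mid, where kmin=kmin and kmid=kmid and kmax=kmax
              and v="kmin - a" and z="kmid - a" and u="kmax - a" and w="b - kmax"])
          show "kmin = a + (kmin - a)" "kmid = a + (kmid - a)" "kmax = a + (kmax - a)" "b = a + (kmax - a) + (b - kmax)"
            using kmin kmax kmid by auto
          show "kmin - a < kmid - a" "kmid - a < kmax - a" using kmin kmid kmax by auto
          show "complete_to E (Y - {x}) (cs ! kmin)" "complete_to E (Y - {x}) (cs ! kmid)"
            "complete_to E (Y - {x}) (cs ! kmax)" using kmin kmid kmax unfolding K_def by auto
          show "\<And>k. a \<le> k \<Longrightarrow> k \<le> b \<Longrightarrow> complete_to E (Y - {x}) (cs ! k) \<Longrightarrow> kmin \<le> k \<and> k \<le> kmax"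
            using kminle kmaxge ab unfolding K_def by auto
        qed
        then show False using p1 ur odd by simp
      next
        case F: False
        have gap: "\<And>i. kmin < i \<Longrightarrow> i < kmax \<Longrightarrow> i \<notin> K" using F by blast
        have "units K kmin kmax = (if kmax = Suc kmin then 1 else 0)"
          by (rule units_last_gap[OF kmin(1) kk kmax(1) gap])
        then have kS: "kmax = Suc kmin" using odd ur by (auto split: if_splits)
        have only: "\<And>k. a \<le> k \<Longrightarrow> k \<le> b \<Longrightarrow> complete_to E (Y - {x}) (cs!k) \<Longrightarrow> k = kmin \<or> k = kmin + 1"
        proof -
          fix k assume k: "a \<le> k" "k \<le> b" "complete_to E (Y - {x}) (cs!k)"
          then have "k \<in> K" using ab unfolding K_def by auto
          then have "kmin \<le> k" "k \<le> kmax" using kminle kmaxge k by auto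
          then show "k = kmin \<or> k = kmin + 1" using kS by auto
        qed
        show False
        proof (cases "kmin = a")
          case True
          then have "a = 0 \<or> a = t" using KA' kmin ea by simp
          then have a0: "a = 0" using ab by auto
          then have "1 \<in> K" using kmax kS True by simp
          then have "LL x" unfolding LL_def K_def by simp
          then show False using nL by simp
        next
          case Fa: False
          show False
          proof (cases "kmax = b")
            case True
            then have "b = 0 \<or> b = t" using KA' kmax eb by simp
            then have bt: "b = t" using ab by auto
            then have "t - 1 \<in> K" using kmin kS True by simp
            then have "RR x" unfolding RR_def K_def by simp
            then show False using nR by simp
          next
            case Fb: False
            have "a < kmin" "kmax < b" using Fa Fb kmin kmax by auto
            show False
            proof (rule Bargs0[OF x acx ab2 ab(2) nw ea eb mid, where c=kmin and p="kmin - a - 1" and q="b - kmin - 2"])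
              show "kmin = a + 1 + (kmin - a - 1)" "b = kmin + 2 + (b - kmin - 2)"
                using \<open>a < kmin\<close> \<open>kmax < b\<close> kS by auto
              show "complete_to E (Y - {x}) (cs ! kmin)" "complete_to E (Y - {x}) (cs ! (kmin + 1))"
                using kmin kmax kS unfolding K_def by auto
              show "\<And>k. a \<le> k \<Longrightarrow> k \<le> b \<Longrightarrow> complete_to E (Y - {x}) (cs ! k) \<Longrightarrow> k = kmin \<or> k = kmin + 1"
                by (rule only)
            qed
          qed
        qed
      qed
    qed
    then show ?thesis unfolding K_def .
  qed
qed

lemma xstep:
  assumes x: "x \<in> Y" and acx: "anticonnected E (Y - {x})"
  shows "LL x \<or> RR x"
proof (rule ccontr)
  assume "\<not> (LL x \<or> RR x)"
  then have nL: "\<not> LL x" and nR: "\<not> RR x" by auto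
  define K where "K = {i. i \<le> t \<and> complete_to E (Y - {x}) (cs!i)}"
  define Ax where "Ax = {i. i \<le> t \<and> E x (cs!i)}"
  have sub: "Y - {x} \<subset> Y" using x by auto
  have gK: "good K 0 t" unfolding K_def by (rule good_IH[OF sub acx]) (use Kint[OF x acx] in blast)
  have "even (units K 0 t)"
  proof (rule SUMU[of 0 Ax])
    show "0 \<in> Ax" using compl[OF c0 x] unfolding Ax_def by simp
    show "t \<in> Ax" using compl[OF ct x] unfolding Ax_def by simp
    show "\<And>a. a \<in> Ax \<Longrightarrow> 0 \<le> a" by simp
    fix a b assume a: "a \<in> Ax" and b: "b \<in> Ax" and ab: "a < b" "b \<le> t"
      and gp: "\<And>i. a < i \<Longrightarrow> i < b \<Longrightarrow> i \<notin> Ax"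
    have mid: "\<And>i. a < i \<Longrightarrow> i < b \<Longrightarrow> \<not> E x (cs!i)" using gp ab unfolding Ax_def by auto
    show "even (units K a b)" unfolding K_def
      by (rule pergap[OF x acx nL nR ab]) (use a b mid in \<open>auto simp: Ax_def\<close>)
  qed simp
  moreover have "even (t - 0) \<longleftrightarrow> even (units K 0 t)"
    by (rule P1[OF gK]) (use c0 ct in \<open>auto simp: K_def complete_to_def\<close>)
  ultimately show False using todd by simp
qed

end


context bg
begin
lemma nsym: "\<not> E a b \<Longrightarrow> \<not> E b a"
proof
  assume "\<not> E a b" "E b a"
  then show False using sym[of b a] by simp
qed
end

context stp
begin

context
  fixes qs
  assumes qp: "ipath (compl_adj E) qs" and qY: "set qs = Y" and qk2: "2 \<le> length qs"
    and Lq: "LL (hd qs)" and Rq: "RR (last qs)"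
begin

lemma dq: "distinct qs" using qp unfolding ipath_def by simp
lemma qne: "qs \<noteq> []" using qk2 by auto
lemma q1Y: "hd qs \<in> Y" using qY qne by auto
lemma qkY: "last qs \<in> Y" using qY qne by auto
lemma q1k: "hd qs \<noteq> last qs"
proof -
  obtain a rest where qa: "qs = a # rest" using qne by (cases qs) auto
  have rne: "rest \<noteq> []" using qk2 qa by auto
  have "last qs = last rest" using qa rne by simp
  moreover have "last rest \<in> set rest" using rne by simp
  moreover have "a \<notin> set rest" using dq qa by simp
  ultimately show ?thesis using qa by auto
qed
lemma Y1: "set (tl qs) = Y - {hd qs}" using set_tl_d[OF dq qne] qY by simp
lemma Y2: "set (butlast qs) = Y - {last qs}" using set_butlast_d[OF dq qne] qY by simp
lemma ac1: "anticonnected E (Y - {hd qs})"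
proof -
  have "tl qs \<noteq> []" using qk2 by (cases qs) auto
  then have "conn (compl_adj E) (set (tl qs))" by (rule cg.ipath_conn[OF ipath_tl[OF qp]])
  then show ?thesis unfolding anticonnected_conn Y1 .
qed
lemma ac2: "anticonnected E (Y - {last qs})"
proof -
  have "butlast qs \<noteq> []" using qk2 by (cases qs) auto
  then have "conn (compl_adj E) (set (butlast qs))" by (rule cg.ipath_conn[OF ipath_butlast[OF qp]])
  then show ?thesis unfolding anticonnected_conn Y2 .
qed

definition T1 where "T1 = {i. 0 < i \<and> i < t \<and> complete_to E (Y - {hd qs}) (cs!i)}"
definition T2 where "T2 = {i. 0 < i \<and> i < t \<and> complete_to E (Y - {last qs}) (cs!i)}"

lemma T1miss: "i \<in> T1 \<Longrightarrow> \<not> E (cs!i) (hd qs)"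
proof
  assume i: "i \<in> T1" and e: "E (cs!i) (hd qs)"
  then have "complete_to E Y (cs!i)" unfolding T1_def complete_to_def by blast
  then show False using cint i unfolding T1_def by blast
qed

lemma T2miss: "i \<in> T2 \<Longrightarrow> \<not> E (cs!i) (last qs)"
proof
  assume i: "i \<in> T2" and e: "E (cs!i) (last qs)"
  then have "complete_to E Y (cs!i)" unfolding T2_def complete_to_def by blast
  then show False using cint i unfolding T2_def by blast
qed

lemma T1adj: "i \<in> T1 \<Longrightarrow> q \<in> set (tl qs) \<Longrightarrow> E (cs!i) q"
  using Y1 unfolding T1_def complete_to_def by blast

lemma T2adj: "i \<in> T2 \<Longrightarrow> q \<in> set (butlast qs) \<Longrightarrow> E (cs!i) q"
  using Y2 unfolding T2_def complete_to_def by blast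

lemma T12: "T1 \<inter> T2 = {}"
proof (rule ccontr)
  assume "T1 \<inter> T2 \<noteq> {}"
  then obtain i where i: "i \<in> T1" "i \<in> T2" by blast
  have "complete_to E Y (cs!i)" using i q1k unfolding T1_def T2_def complete_to_def by blast
  then show False using cint i unfolding T1_def by blast
qed

lemma oneT1: "1 \<in> T1" using Lq t3 unfolding LL_def T1_def by simp
lemma tT2: "t - 1 \<in> T2" using Rq t3 unfolding RR_def T2_def by simp

lemma K1eq: "{i. i \<le> t \<and> complete_to E (Y - {hd qs}) (cs!i)} = insert 0 (insert t T1)"
  using c0 ct unfolding T1_def complete_to_def by auto
lemma K2eq: "{i. i \<le> t \<and> complete_to E (Y - {last qs}) (cs!i)} = insert 0 (insert t T2)"
  using c0 ct unfolding T2_def complete_to_def by auto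

lemma g1: "good (insert 0 (insert t T1)) 0 t"
proof -
  have sub: "Y - {hd qs} \<subset> Y" using q1Y by auto
  have "good {i. i \<le> t \<and> complete_to E (Y - {hd qs}) (cs!i)} 0 t"
  proof (rule good_IH[OF sub ac1])
    have "\<exists>i. 0 < i \<and> i < t \<and> complete_to E (Y - {hd qs}) (cs!i)" using oneT1 unfolding T1_def by blast
    then show "(\<exists>r>t. r < length cs \<and> complete_to E Y (cs ! r)) \<or> (\<exists>i. 0 < i \<and> i < t \<and> complete_to E (Y - {hd qs}) (cs ! i))" by blast
  qed
  then show ?thesis unfolding K1eq .
qed

lemma g2: "good (insert 0 (insert t T2)) 0 t"
proof -
  have sub: "Y - {last qs} \<subset> Y" using qkY by auto
  have "good {i. i \<le> t \<and> complete_to E (Y - {last qs}) (cs!i)} 0 t"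
  proof (rule good_IH[OF sub ac2])
    have "\<exists>i. 0 < i \<and> i < t \<and> complete_to E (Y - {last qs}) (cs!i)" using tT2 unfolding T2_def by blast
    then show "(\<exists>r>t. r < length cs \<and> complete_to E Y (cs ! r)) \<or> (\<exists>i. 0 < i \<and> i < t \<and> complete_to E (Y - {last qs}) (cs ! i))" by blast
  qed
  then show ?thesis unfolding K2eq .
qed

lemma qsV: "set qs \<subseteq> V" using qY YV by simp
lemma csnq: "i < length cs \<Longrightarrow> cs!i \<notin> set qs" using qY csY by simp

lemma f4T:
  assumes i: "i \<in> T1" and j: "j \<in> T2" and eij: "E (cs!i) (cs!j)"
    and cl: "cl \<in> V" "cl \<notin> Y" "complete_to E Y cl" "\<not> E cl (cs!i)" "\<not> E cl (cs!j)" "cl \<noteq> cs!i" "cl \<noteq> cs!j"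
  shows "odd (length qs)"
proof (rule f4[OF qp qk2 qsV])
  have il: "i < length cs" "j < length cs" using i j tn unfolding T1_def T2_def by auto
  show "cs!i \<in> V" "cs!j \<in> V" "cl \<in> V" using csV il cl by auto
  show "cs!i \<notin> set qs" "cs!j \<notin> set qs" using csnq il by auto
  show "cl \<notin> set qs" using cl qY by simp
  show "cs!i \<noteq> cs!j" using i j T12 hole_nth_eq[OF hole il] by auto
  show "cl \<noteq> cs!i" "cl \<noteq> cs!j" using cl by auto
  show "E (cs!i) (cs!j)" by fact
  show "\<not> E (cs!i) (hd qs)" by (rule T1miss[OF i])
  show "\<And>q. q \<in> set (tl qs) \<Longrightarrow> E (cs!i) q" by (rule T1adj[OF i])
  show "\<not> E (cs!j) (last qs)" by (rule T2miss[OF j])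
  show "\<And>q. q \<in> set (butlast qs) \<Longrightarrow> E (cs!j) q" by (rule T2adj[OF j])
  show "\<And>q. q \<in> set qs \<Longrightarrow> E cl q" using cl(3) qY unfolding complete_to_def by blast
  show "\<not> E cl (cs!i)" "\<not> E cl (cs!j)" by fact+
qed

lemma keven: "even (length qs)"
proof (cases "t = 3")
  case True
  have nt: "t \<noteq> length cs - 1" using B5 True by auto
  then obtain r0 where r0: "t < r0" "r0 < length cs" "complete_to E Y (cs!r0)" using mode by blast
  have L5: "5 \<le> length cs" using r0 True by simp
  have l0: "0 < length cs" "1 < length cs" "2 < length cs" "3 < length cs" using L5 by linarith+
  have i1: "1 \<in> T1" by (rule oneT1)
  have i2: "2 \<in> T2" using tT2 True by simp
  have a12: "E (cs!1) (cs!2)" using hole_adj[OF hole, of 1 2] L5 by simp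
  have n1: "\<not> E (cs!r0) (cs!1)" "\<not> E (cs!r0) (cs!2)" "cs!r0 \<noteq> cs!1" "cs!r0 \<noteq> cs!2"
    using hole_adj[OF hole r0(2), of 1] hole_adj[OF hole r0(2), of 2]
      hole_nth_eq[OF hole r0(2), of 1] hole_nth_eq[OF hole r0(2), of 2] r0 True L5 by auto
  have "odd (length qs)"
    by (rule f4T[OF i1 i2 a12 csV[OF r0(2)] csY[OF r0(2)] r0(3) n1])
  moreover have "even (length qs)"
  proof (rule fT3[OF qp qk2 qsV])
    show "cs!0 \<in> V" "cs!1 \<in> V" "cs!2 \<in> V" "cs!3 \<in> V" using csV l0 by auto
    show "cs!0 \<notin> set qs" "cs!1 \<notin> set qs" "cs!2 \<notin> set qs" "cs!3 \<notin> set qs" using csnq l0 by auto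
    show "cs!0 \<noteq> cs!1" "cs!0 \<noteq> cs!2" "cs!0 \<noteq> cs!3" "cs!1 \<noteq> cs!2" "cs!1 \<noteq> cs!3" "cs!2 \<noteq> cs!3"
      using hole_nth_eq[OF hole] l0 by auto
    show "E (cs!1) (cs!0)" "E (cs!1) (cs!2)" "E (cs!2) (cs!3)" "\<not> E (cs!0) (cs!2)" "\<not> E (cs!0) (cs!3)" "\<not> E (cs!1) (cs!3)"
      using hole_adj[OF hole] l0 L5 by auto
    show "\<And>q. q \<in> set qs \<Longrightarrow> E (cs!0) q \<and> E (cs!3) q" using c0 ct True qY unfolding complete_to_def by auto
    show "\<not> E (cs!1) (hd qs)" by (rule T1miss[OF i1])
    show "\<And>q. q \<in> set (tl qs) \<Longrightarrow> E (cs!1) q" by (rule T1adj[OF i1])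
    show "\<not> E (cs!2) (last qs)" by (rule T2miss[OF i2])
    show "\<And>q. q \<in> set (butlast qs) \<Longrightarrow> E (cs!2) q" by (rule T2adj[OF i2])
  qed
  ultimately show ?thesis by simp
next
  case False
  then have t5: "5 \<le> t" using t3 todd by presburger
  have i1: "1 \<in> T1" by (rule oneT1)
  have j1: "t - 1 \<in> T2" by (rule tT2)
  have il: "1 < length cs" "t - 1 < length cs" using tn t5 by auto
  show ?thesis
  proof (rule f3[OF qp qk2 qsV])
    show "cs!1 \<in> V" "cs!(t-1) \<in> V" using csV il by auto
    show "cs!1 \<notin> set qs" "cs!(t-1) \<notin> set qs" using csnq il by auto
    show "cs!1 \<noteq> cs!(t-1)" using hole_nth_eq[OF hole il] t5 by auto
    show "\<not> E (cs!1) (cs!(t-1))" using hole_adj[OF hole il] t5 tn by auto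
    show "\<not> E (cs!1) (hd qs)" by (rule T1miss[OF i1])
    show "\<And>q. q \<in> set (tl qs) \<Longrightarrow> E (cs!1) q" by (rule T1adj[OF i1])
    show "\<not> E (cs!(t-1)) (last qs)" by (rule T2miss[OF j1])
    show "\<And>q. q \<in> set (butlast qs) \<Longrightarrow> E (cs!(t-1)) q" by (rule T2adj[OF j1])
  qed
qed


lemma T1int: "i \<in> T1 \<Longrightarrow> 0 < i \<and> i < t" unfolding T1_def by simp
lemma T2int: "i \<in> T2 \<Longrightarrow> 0 < i \<and> i < t" unfolding T2_def by simp

lemma between_none2:
  assumes c: "0 < c" "c < t" "c \<notin> T1" "c \<notin> T2" and k2: "length qs = 2"
  shows "\<not> E (cs!c) (hd qs) \<and> \<not> E (cs!c) (last qs)"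
proof -
  have Y1s: "Y - {hd qs} = {last qs}"
  proof -
    have "set (tl qs) = {last qs}" using k2 qne by (cases qs; cases "tl qs") auto
    then show ?thesis using Y1 by simp
  qed
  have Y2s: "Y - {last qs} = {hd qs}"
  proof -
    have "set (butlast qs) = {hd qs}" using k2 qne by (cases qs; cases "tl qs") auto
    then show ?thesis using Y2 by simp
  qed
  have "\<not> E (cs!c) (last qs)"
  proof
    assume "E (cs!c) (last qs)"
    then have "complete_to E (Y - {hd qs}) (cs!c)" unfolding Y1s complete_to_def by simp
    then show False using c unfolding T1_def by simp
  qed
  moreover have "\<not> E (cs!c) (hd qs)"
  proof
    assume "E (cs!c) (hd qs)"
    then have "complete_to E (Y - {last qs}) (cs!c)" unfolding Y2s complete_to_def by simp
    then show False using c unfolding T2_def by simp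
  qed
  ultimately show ?thesis by simp
qed

lemma cross:
  assumes i: "i \<in> T1" and j: "j \<in> T2"
    and gp: "\<And>c. min i j < c \<Longrightarrow> c < max i j \<Longrightarrow> c \<notin> T1 \<and> c \<notin> T2"
  shows "even (max i j - min i j)"
proof -
  define lo where "lo = min i j"
  define hi where "hi = max i j"
  have ij: "i \<noteq> j" using i j T12 by auto
  have lh: "lo < hi" using ij unfolding lo_def hi_def by auto
  have lo: "0 < lo" "lo < t" "hi < t" "0 < hi" using T1int[OF i] T2int[OF j] unfolding lo_def hi_def by auto
  have lhT: "(lo \<in> T1 \<and> hi \<in> T2) \<or> (lo \<in> T2 \<and> hi \<in> T1)"
    using i j unfolding lo_def hi_def by (cases "i \<le> j") (auto simp: min_def max_def)
  have gp': "\<And>c. lo < c \<Longrightarrow> c < hi \<Longrightarrow> c \<notin> T1 \<and> c \<notin> T2" using gp unfolding lo_def hi_def by blast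
  have ke: "even (length qs)" by (rule keven)
  have tl: "hi < length cs" "lo < length cs" using lo tn by auto
  show ?thesis
  proof (cases "hi = Suc lo")
    case True
    have adj: "E (cs!lo) (cs!hi)" using hole_adj[OF hole tl(2) tl(1)] True by simp
    have md: "t \<noteq> length cs - 1 \<or> 2 \<le> lo \<or> hi + 3 \<le> length cs"
    proof (cases "t = length cs - 1")
      case True
      then have "5 \<le> t" using B5 by simp
      then show ?thesis using \<open>hi = Suc lo\<close> True lo by auto
    qed simp
    obtain cl where cl: "cl \<in> V" "cl \<notin> Y" "complete_to E Y cl"
      "\<And>k. lo \<le> k \<Longrightarrow> k \<le> hi \<Longrightarrow> \<not> E cl (cs!k) \<and> cl \<noteq> cs!k"
      using closer[of lo hi] lo lh md by auto
    have "odd (length qs)"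
    proof (cases "lo \<in> T1")
      case True
      then have hT: "hi \<in> T2" using lhT T12 by auto
      show ?thesis by (rule f4T[OF True hT adj cl(1-3)]) (use cl(4)[of lo] cl(4)[of hi] lh in auto)
    next
      case False
      then have lT: "lo \<in> T2" and hT: "hi \<in> T1" using lhT by auto
      have adj': "E (cs!hi) (cs!lo)" using adj sym by blast
      show ?thesis by (rule f4T[OF hT lT adj' cl(1-3)]) (use cl(4)[of lo] cl(4)[of hi] lh in auto)
    qed
    then show ?thesis using ke by simp
  next
    case False
    then have lh2: "Suc lo < hi" using lh by simp
    show ?thesis
    proof (cases "length qs = 2")
      case k2: True
      have bn: "\<And>c. lo < c \<Longrightarrow> c < hi \<Longrightarrow> \<not> E (cs!c) (hd qs) \<and> \<not> E (cs!c) (last qs)"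
        using between_none2 gp' lo k2 by (meson less_trans)
      have hqlq: "\<not> E (hd qs) (last qs)"
      proof -
        have "compl_adj E (qs!0) (qs!1)" using qp k2 unfolding ipath_def by auto
        moreover have "hd qs = qs!0" using qne by (simp add: hd_conv_nth)
        moreover have "last qs = qs!1" using qne k2 by (simp add: last_conv_nth)
        ultimately show ?thesis unfolding compl_adj_def by simp
      qed
      obtain u w where uw: "u \<in> Y" "w \<in> Y" "\<not> E u w" "E u (cs!lo)" "\<not> E u (cs!hi)" "E w (cs!hi)" "\<not> E w (cs!lo)"
        "\<And>c. lo < c \<Longrightarrow> c < hi \<Longrightarrow> \<not> E u (cs!c) \<and> \<not> E w (cs!c)"
      proof (cases "lo \<in> T1")
        case True
        then have hT: "hi \<in> T2" using lhT T12 by auto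
        have lq: "last qs \<in> set (tl qs)" unfolding Y1 using q1k qkY by simp
        have hq: "hd qs \<in> set (butlast qs)" unfolding Y2 using q1k q1Y by simp
        show ?thesis
        proof (rule that[of "last qs" "hd qs"])
          show "last qs \<in> Y" "hd qs \<in> Y" by (rule qkY, rule q1Y)
          show "\<not> E (last qs) (hd qs)" by (rule nsym[OF hqlq])
          show "E (last qs) (cs!lo)" by (rule sym[OF T1adj[OF True lq]])
          show "\<not> E (last qs) (cs!hi)" by (rule nsym[OF T2miss[OF hT]])
          show "E (hd qs) (cs!hi)" by (rule sym[OF T2adj[OF hT hq]])
          show "\<not> E (hd qs) (cs!lo)" by (rule nsym[OF T1miss[OF True]])
          fix c assume c: "lo < c" "c < hi"
          have "\<not> E (cs!c) (hd qs) \<and> \<not> E (cs!c) (last qs)" by (rule bn[OF c])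
          then have "\<not> E (cs!c) (hd qs)" "\<not> E (cs!c) (last qs)" by simp_all
          then show "\<not> E (last qs) (cs!c) \<and> \<not> E (hd qs) (cs!c)" using nsym[of "cs!c"] by simp
        qed
      next
        case False
        then have lT: "lo \<in> T2" and hT: "hi \<in> T1" using lhT by auto
        have lq: "last qs \<in> set (tl qs)" unfolding Y1 using q1k qkY by simp
        have hq: "hd qs \<in> set (butlast qs)" unfolding Y2 using q1k q1Y by simp
        show ?thesis
        proof (rule that[of "hd qs" "last qs"])
          show "hd qs \<in> Y" "last qs \<in> Y" by (rule q1Y, rule qkY)
          show "\<not> E (hd qs) (last qs)" by (rule hqlq)
          show "E (hd qs) (cs!lo)" by (rule sym[OF T2adj[OF lT hq]])
          show "\<not> E (hd qs) (cs!hi)" by (rule nsym[OF T1miss[OF hT]])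
          show "E (last qs) (cs!hi)" by (rule sym[OF T1adj[OF hT lq]])
          show "\<not> E (last qs) (cs!lo)" by (rule nsym[OF T2miss[OF lT]])
          fix c assume c: "lo < c" "c < hi"
          have "\<not> E (cs!c) (hd qs) \<and> \<not> E (cs!c) (last qs)" by (rule bn[OF c])
          then have "\<not> E (cs!c) (hd qs)" "\<not> E (cs!c) (last qs)" by simp_all
          then show "\<not> E (hd qs) (cs!c) \<and> \<not> E (last qs) (cs!c)" using nsym[of "cs!c"] by simp
        qed
      qed
      show ?thesis
      proof (cases "t = length cs - 1 \<and> lo = 1 \<and> hi = length cs - 2")
        case True
        have loT1: "lo \<in> T1" using True oneT1 by simp
        then have hT: "hi \<in> T2" using lhT T12 by auto
        have lq: "last qs \<in> set (tl qs)" unfolding Y1 using q1k qkY by simp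
        have hq: "hd qs \<in> set (butlast qs)" unfolding Y2 using q1k q1Y by simp
        have n6: "6 \<le> length cs" using B5 True by simp
        have Lu: "\<forall>p<length cs. E (last qs) (cs!p) \<longleftrightarrow> (p = 0 \<or> p = 1 \<or> p = length cs - 1)"
        proof (intro allI impI)
          fix p assume p: "p < length cs"
          consider "p = 0" | "p = 1" | "p = length cs - 1" | "p = length cs - 2" | "1 < p" "p < length cs - 2"
            using p by linarith
          then show "E (last qs) (cs!p) \<longleftrightarrow> (p = 0 \<or> p = 1 \<or> p = length cs - 1)"
          proof cases
            case 1 then show ?thesis using compl[OF c0 qkY] by simp
          next
            case 2 then show ?thesis using sym[OF T1adj[OF loT1 lq]] True by simp
          next
            case 3 then show ?thesis using compl[OF ct qkY] True by simp
          next
            case 4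
            have "length cs - 2 \<noteq> 1" "length cs - 2 \<noteq> length cs - 1" "length cs - 2 \<noteq> 0" using n6 by linarith+
            then show ?thesis using nsym[OF T2miss[OF hT]] True 4 by simp
          next
            case 5
            then have "\<not> E (cs!p) (hd qs) \<and> \<not> E (cs!p) (last qs)" using bn True by simp
            then have "\<not> E (hd qs) (cs!p)" "\<not> E (last qs) (cs!p)" using nsym[of "cs!p"] by auto
            then show ?thesis using 5 by auto
          qed
        qed
        have Lb: "\<forall>p<length cs. E (hd qs) (cs!p) \<longleftrightarrow> (p = 0 \<or> p = length cs - 2 \<or> p = length cs - 1)"
        proof (intro allI impI)
          fix p assume p: "p < length cs"
          consider "p = 0" | "p = 1" | "p = length cs - 1" | "p = length cs - 2" | "1 < p" "p < length cs - 2"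
            using p by linarith
          then show "E (hd qs) (cs!p) \<longleftrightarrow> (p = 0 \<or> p = length cs - 2 \<or> p = length cs - 1)"
          proof cases
            case 1 then show ?thesis using compl[OF c0 q1Y] by simp
          next
            case 2
            have "(1::nat) \<noteq> length cs - 2" "(1::nat) \<noteq> length cs - 1" using n6 by linarith+
            then show ?thesis using nsym[OF T1miss[OF loT1]] True 2 by simp
          next
            case 3 then show ?thesis using compl[OF ct q1Y] True by simp
          next
            case 4 then show ?thesis using sym[OF T2adj[OF hT hq]] True by simp
          next
            case 5
            then have "\<not> E (cs!p) (hd qs) \<and> \<not> E (cs!p) (last qs)" using bn True by simp
            then have "\<not> E (hd qs) (cs!p)" "\<not> E (last qs) (cs!p)" using nsym[of "cs!p"] by auto
            then show ?thesis using 5 by auto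
          qed
        qed
        have "Outc Y cs" unfolding Outc_def
        proof (rule disjI2, rule bexI[OF _ qkY], rule bexI[OF _ q1Y], intro conjI)
          show "\<not> E (last qs) (hd qs)" by (rule nsym[OF hqlq])
        qed (use Lu Lb in auto)
        then show ?thesis using gneg True by simp
      next
        case nex: False
        have md: "t \<noteq> length cs - 1 \<or> 2 \<le> lo \<or> hi + 3 \<le> length cs"
          using nex lo tn by auto
        obtain cl where cl: "cl \<in> V" "cl \<notin> Y" "complete_to E Y cl"
          "\<And>k. lo \<le> k \<Longrightarrow> k \<le> hi \<Longrightarrow> \<not> E cl (cs!k) \<and> cl \<noteq> cs!k"
          using closer[of lo hi] lo lh md by auto
        have "even (hi - lo)"
        proof (rule f2s[OF uw(1) uw(2) uw(3) lh])
          show "hi \<le> t" using lo by simp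
          show "\<not> (lo = 0 \<and> hi = length cs - 1)" using lo by simp
          show "E u (cs!lo)" "E w (cs!hi)" using uw by auto
          show "\<And>c. lo < c \<Longrightarrow> c \<le> hi \<Longrightarrow> \<not> E u (cs!c)" using uw by (metis le_neq_implies_less)
          show "\<And>c. lo \<le> c \<Longrightarrow> c < hi \<Longrightarrow> \<not> E w (cs!c)" using uw by (metis le_neq_implies_less)
          show "cl \<in> V" "cl \<notin> Y" "complete_to E Y cl" using cl by auto
          show "\<And>c. lo \<le> c \<Longrightarrow> c \<le> hi \<Longrightarrow> \<not> E cl (cs!c) \<and> cl \<noteq> cs!c" by (rule cl(4))
        qed
        then show ?thesis unfolding lo_def hi_def .
      qed
    next
      case k3: False
      then have k3: "3 \<le> length qs" using qk2 by simp
      define Y3 where "Y3 = Y - {hd qs, last qs}"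
      have tlne: "tl qs \<noteq> []" using k3 by (cases qs) auto
      have lt: "last (tl qs) = last qs" using tlne qne by (cases qs) auto
      have Y3s: "set (butlast (tl qs)) = Y3"
        using set_butlast_d[OF _ tlne] dq Y1 lt unfolding Y3_def by (auto simp: distinct_tl)
      have bne: "butlast (tl qs) \<noteq> []" using k3 by (cases qs) (auto simp: butlast_conv_take)
      have ac3: "anticonnected E Y3"
      proof -
        have "conn (compl_adj E) (set (butlast (tl qs)))"
          by (rule cg.ipath_conn[OF ipath_butlast[OF ipath_tl[OF qp]] bne])
        then show ?thesis unfolding anticonnected_conn Y3s .
      qed
      have sub3: "Y3 \<subset> Y" unfolding Y3_def using q1Y by auto
      have nC: "\<not> complete_to E Y3 (cs!c)" if c: "lo < c" "c < hi" for c
      proof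
        assume C: "complete_to E Y3 (cs!c)"
        have ci: "0 < c" "c < t" "c < length cs" using c lo tn by auto
        have nT: "c \<notin> T1" "c \<notin> T2" using gp' c by auto
        have m1: "\<not> E (cs!c) (hd qs)"
        proof
          assume "E (cs!c) (hd qs)"
          then have "complete_to E (Y - {last qs}) (cs!c)" using C unfolding Y3_def complete_to_def by blast
          then show False using nT ci unfolding T2_def by simp
        qed
        have m2: "\<not> E (cs!c) (last qs)"
        proof
          assume "E (cs!c) (last qs)"
          then have "complete_to E (Y - {hd qs}) (cs!c)" using C unfolding Y3_def complete_to_def by blast
          then show False using nT ci unfolding T1_def by simp
        qed
        have "odd (length qs)"
        proof (rule fC[OF qp k3 qsV csV[OF ci(3)] csnq[OF ci(3)] m1 m2])
          fix q assume "q \<in> set qs" "q \<noteq> hd qs" "q \<noteq> last qs"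
          then have "q \<in> Y3" using qY unfolding Y3_def by auto
          then show "E (cs!c) q" using C unfolding complete_to_def by blast
        qed
        then show False using ke by simp
      qed
      have loC: "complete_to E Y3 (cs!lo)" "complete_to E Y3 (cs!hi)"
        using lhT unfolding T1_def T2_def Y3_def complete_to_def by auto
      have g3: "good {k. k \<le> t \<and> complete_to E Y3 (cs!k)} 0 t"
      proof (rule good_IH[OF sub3 ac3])
        show "(\<exists>r>t. r < length cs \<and> complete_to E Y (cs ! r)) \<or> (\<exists>i. 0 < i \<and> i < t \<and> complete_to E Y3 (cs ! i))"
          using loC lo by blast
      qed
      have "hi = Suc lo \<or> even (hi - lo)"
        by (rule goodD[OF g3]) (use loC lo lh nC in auto)
      then show ?thesis using lh2 unfolding lo_def hi_def by auto
    qed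
  qed
qed


lemma FCfalse: False
proof -
  have "even t"
  proof (rule two_set[of T1 t T2])
    show "T1 \<subseteq> {0<..<t}" "T2 \<subseteq> {0<..<t}" unfolding T1_def T2_def by auto
    show "T1 \<inter> T2 = {}" by (rule T12)
    show "T1 \<noteq> {}" using oneT1 by blast
    show "good (insert 0 (insert t T1)) 0 t" by (rule g1)
    show "good (insert 0 (insert t T2)) 0 t" by (rule g2)
    fix i j assume i: "i \<in> T1" and j: "j \<in> T2"
    {
      assume ij: "i < j" and gp: "\<And>c. i < c \<Longrightarrow> c < j \<Longrightarrow> c \<notin> T1 \<and> c \<notin> T2"
      have "even (max i j - min i j)" by (rule cross[OF i j]) (use ij gp in auto)
      then show "even (j - i)" using ij by simp
    }
    {
      assume ij: "j < i" and gp: "\<And>c. j < c \<Longrightarrow> c < i \<Longrightarrow> c \<notin> T1 \<and> c \<notin> T2"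
      have "even (max i j - min i j)" by (rule cross[OF i j]) (use ij gp in auto)
      then show "even (i - j)" using ij by simp
    }
  qed
  then show False using todd by simp
qed

end

lemma hd_ne_last: "distinct qs \<Longrightarrow> 2 \<le> length qs \<Longrightarrow> hd qs \<noteq> last qs"
proof -
  assume dq: "distinct qs" and k: "2 \<le> length qs"
  obtain a rest where qa: "qs = a # rest" using k by (cases qs) auto
  have rne: "rest \<noteq> []" using k qa by auto
  have "last qs = last rest" using qa rne by simp
  moreover have "last rest \<in> set rest" using rne by simp
  moreover have "a \<notin> set rest" using dq qa by simp
  ultimately show ?thesis using qa by auto
qed

lemma stp_false: False
proof -
  obtain a b where ab: "a \<in> Y" "b \<in> Y" "a \<noteq> b" using two_el by blast
  have finY: "finite Y" using finite_subset[OF YV finV] .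
  have cY: "conn (compl_adj E) Y" using acY unfolding anticonnected_conn .
  have LR: "\<And>u. u \<in> Y \<Longrightarrow> conn (compl_adj E) (Y - {u}) \<Longrightarrow> LL u \<or> RR u"
    using xstep unfolding anticonnected_conn by blast
  from cg.noncut_struct[OF cY finY ab]
  show False
  proof (elim disjE exE conjE)
    fix u1 u2 u3
    assume u: "u1 \<in> Y" "u2 \<in> Y" "u3 \<in> Y" "u1 \<noteq> u2" "u1 \<noteq> u3" "u2 \<noteq> u3"
      and c: "conn (compl_adj E) (Y - {u1})" "conn (compl_adj E) (Y - {u2})" "conn (compl_adj E) (Y - {u3})"
    have l1: "LL u1 \<or> RR u1" using LR u c by blast
    have l2: "LL u2 \<or> RR u2" using LR u c by blast
    have l3: "LL u3 \<or> RR u3" using LR u c by blast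
    show False using l1 l2 l3 LL_unique RR_unique u by metis
  next
    fix qs assume qp: "ipath (compl_adj E) qs" and qY: "set qs = Y" and k: "2 \<le> length qs"
    have dq: "distinct qs" using qp unfolding ipath_def by simp
    have ne: "qs \<noteq> []" using k by auto
    have hY: "hd qs \<in> Y" and lY: "last qs \<in> Y" using qY ne by auto
    have hl: "hd qs \<noteq> last qs" by (rule hd_ne_last[OF dq k])
    have c1: "conn (compl_adj E) (Y - {hd qs})"
    proof -
      have "tl qs \<noteq> []" using k by (cases qs) auto
      then have "conn (compl_adj E) (set (tl qs))" by (rule cg.ipath_conn[OF ipath_tl[OF qp]])
      then show ?thesis using set_tl_d[OF dq ne] qY by simp
    qed
    have c2: "conn (compl_adj E) (Y - {last qs})"
    proof -
      have "butlast qs \<noteq> []" using k by (cases qs) auto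
      then have "conn (compl_adj E) (set (butlast qs))" by (rule cg.ipath_conn[OF ipath_butlast[OF qp]])
      then show ?thesis using set_butlast_d[OF dq ne] qY by simp
    qed
    have lh: "LL (hd qs) \<or> RR (hd qs)" using LR hY c1 by blast
    have ll: "LL (last qs) \<or> RR (last qs)" using LR lY c2 by blast
    show False
    proof (cases "LL (hd qs)")
      case True
      then have "\<not> LL (last qs)" using LL_unique hY lY hl by blast
      then have "RR (last qs)" using ll by simp
      then show False using FCfalse[OF qp qY k True] by simp
    next
      case False
      then have Rh: "RR (hd qs)" using lh by simp
      then have "\<not> RR (last qs)" using RR_unique hY lY hl by blast
      then have Ll: "LL (last qs)" using ll by simp
      have qp': "ipath (compl_adj E) (rev qs)" by (rule ipath_rev[OF qp])
      have "hd (rev qs) = last qs" "last (rev qs) = hd qs" using ne by (auto simp: hd_rev last_rev)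
      then show False using FCfalse[OF qp' _ _ _ _] qY k Ll Rh by simp
    qed
  qed
qed

end


context bg
begin

lemma main: "finite Y \<Longrightarrow> Y \<subseteq> V \<Longrightarrow> anticonnected E Y \<Longrightarrow> Acore Y \<and> Bst Y"
proof (induction "card Y" arbitrary: Y rule: less_induct)
  case less
  have IH: "\<And>Y'. Y' \<subset> Y \<Longrightarrow> anticonnected E Y' \<Longrightarrow> Acore Y' \<and> Bst Y'"
  proof -
    fix Y' assume sub: "Y' \<subset> Y" and ac: "anticonnected E Y'"
    have "card Y' < card Y" by (rule psubset_card_mono[OF less.prems(1) sub])
    moreover have "finite Y'" using sub less.prems(1) by (meson finite_subset psubset_imp_subset)
    moreover have "Y' \<subseteq> V" using sub less.prems(2) by blast
    ultimately show "Acore Y' \<and> Bst Y'" using less.hyps ac by blast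
  qed
  have A: "Acore Y" unfolding Acore_def
  proof (intro allI impI)
    fix cs t r
    assume h: "hole_in (V - Y) E cs" and t0: "0 < t" and tr: "t < r" and rl: "r < length cs"
      and c0: "complete_to E Y (cs ! 0)" and ct: "complete_to E Y (cs ! t)" and cr: "complete_to E Y (cs ! r)"
      and ci: "\<forall>i. 0 < i \<and> i < t \<longrightarrow> \<not> complete_to E Y (cs ! i)"
    show "t = 1 \<or> even t"
    proof (rule ccontr)
      assume "\<not> (t = 1 \<or> even t)"
      then have t3: "3 \<le> t" and to: "odd t" using t0 by presburger+
      interpret S: stp V E Y cs t
      proof
        show "Y \<subseteq> V" by (rule less.prems(2))
        show "anticonnected E Y" by (rule less.prems(3))
        show "\<And>Y'. Y' \<subset> Y \<Longrightarrow> anticonnected E Y' \<Longrightarrow> Acore Y' \<and> Bst Y'" by (rule IH)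
        show "hole_in (V - Y) E cs" by (rule h)
        show "3 \<le> t" "odd t" by (rule t3, rule to)
        show "t < length cs" using tr rl by simp
        show "complete_to E Y (cs ! 0)" "complete_to E Y (cs ! t)" by (rule c0, rule ct)
        show "\<And>i. 0 < i \<Longrightarrow> i < t \<Longrightarrow> \<not> complete_to E Y (cs ! i)" using ci by blast
        show "(\<exists>r. t < r \<and> r < length cs \<and> complete_to E Y (cs ! r)) \<or> t = length cs - 1" using tr rl cr by blast
        show "t = length cs - 1 \<Longrightarrow> 4 < length cs" using tr rl by linarith
        show "\<not> (t = length cs - 1 \<and> Outc Y cs)" using tr rl by linarith
      qed
      show False by (rule S.stp_false)
    qed
  qed
  have B: "Bst Y" unfolding Bst_def
  proof (intro allI impI)
    fix cs
    assume h: "hole_in (V - Y) E cs" and l4: "4 < length cs"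
      and c0: "complete_to E Y (cs ! 0)" and ct: "complete_to E Y (cs ! (length cs - 1))"
      and ci: "\<forall>i. 0 < i \<and> i < length cs - 1 \<longrightarrow> \<not> complete_to E Y (cs ! i)"
    show "Outc Y cs"
    proof (rule ccontr)
      assume no: "\<not> Outc Y cs"
      have ev: "even (length cs)" using even_hole[OF hole_mono[OF h]] by blast
      have t3: "3 \<le> length cs - 1" and to: "odd (length cs - 1)" using l4 ev by presburger+
      interpret S: stp V E Y cs "length cs - 1"
      proof
        show "Y \<subseteq> V" by (rule less.prems(2))
        show "anticonnected E Y" by (rule less.prems(3))
        show "\<And>Y'. Y' \<subset> Y \<Longrightarrow> anticonnected E Y' \<Longrightarrow> Acore Y' \<and> Bst Y'" by (rule IH)
        show "hole_in (V - Y) E cs" by (rule h)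
        show "3 \<le> length cs - 1" "odd (length cs - 1)" by (rule t3, rule to)
        show "length cs - 1 < length cs" using l4 by simp
        show "complete_to E Y (cs ! 0)" "complete_to E Y (cs ! (length cs - 1))" by (rule c0, rule ct)
        show "\<And>i. 0 < i \<Longrightarrow> i < length cs - 1 \<Longrightarrow> \<not> complete_to E Y (cs ! i)" using ci by blast
        show "(\<exists>r. length cs - 1 < r \<and> r < length cs \<and> complete_to E Y (cs ! r)) \<or> length cs - 1 = length cs - 1" by simp
        show "length cs - 1 = length cs - 1 \<Longrightarrow> 4 < length cs" using l4 by simp
        show "\<not> (length cs - 1 = length cs - 1 \<and> Outc Y cs)" using no by simp
      qed
      show False by (rule S.stp_false)
    qed
  qed
  show ?case using A B by simp
qed

end

theorem theorem2p10:
  fixes V :: "'a set" and E :: "'a \<Rightarrow> 'a \<Rightarrow> bool" and X :: "'a set" and cs :: "'a list"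
  assumes "berge V E"
    and "X \<subseteq> V"
    and "anticonnected E X"
    and "hole_in (V - X) E cs"
    and "length cs > 4"
    and "complete_to E X (cs ! 0)"
    and "complete_to E X (cs ! (length cs - 1))"
    and "\<forall>i. 0 < i \<and> i < length cs - 1 \<longrightarrow> \<not> complete_to E X (cs ! i)"
  shows "(\<exists>x\<in>X. \<forall>i < length cs. E x (cs ! i) \<longleftrightarrow> (i = 0 \<or> i = length cs - 1))
     \<or> (\<exists>a\<in>X. \<exists>b\<in>X. \<not> E a b \<and>
          (\<forall>i < length cs. E a (cs ! i) \<longleftrightarrow> (i = 0 \<or> i = 1 \<or> i = length cs - 1)) \<and>
          (\<forall>i < length cs. E b (cs ! i) \<longleftrightarrow> (i = 0 \<or> i = length cs - 2 \<or> i = length cs - 1)))"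
proof -
  interpret bg V E by unfold_locales (rule assms(1))
  have finX: "finite X" using finite_subset[OF assms(2) finV] .
  have "Bst X" using main[OF finX assms(2) assms(3)] by simp
  then have "Outc X cs" unfolding Bst_def using assms(4-8) by blast
  then show ?thesis unfolding Outc_def .
qed


end
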